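(* Assume $X$ is a semimartingale. Define the predictable set $$\Gamma_0:=\{(\omega,t,x): X_{t-}(\omega)<b(t),\ x=b(t)-X_{t-}(\omega)\}.$$ If $\mathbf 1_{\Gamma_0}*\nu^X\equiv 0$, then $\mathbb P(J_0)=0$. In particular this holds whenever $\nu^X$ admits a predictable disintegration $\nu^X(\omega,dt,dx)=K(\omega,t,dx)\,dA_t(\omega)$, with $A$ a predictable increasing process and $K(\omega,t,\cdot)$ a diffuse (atomless) measure for $\mathbb P\otimes dA$-almost every $(\omega,t)$.
   Context: Let $(\Omega,\mathcal F,\mathbb F=(\mathcal F_t)_{t\ge0},\mathbb P)$ be a filtered probability space satisfying the usual conditions. Let $X$ be a real-valued $\mathbb F$-semimartingale (càdlàg) and $b:[0,\infty)\to\mathbb R$ a continuous deterministic function, with $X_0<b(0)$ identically. $X_{t-}$ denotes the left limit. Let $\mu^X(dt,dx):=\sum_{s>0:\Delta X_s\ne0}\delta_{(s,\Delta X_s)}(dt,dx)$ be the jump measure of $X$ and $\nu^X$ its predictable compensator. For a function $W\ge0$ on $\Omega\times[0,\infty)\times\mathbb R$, $(W*\mu)_t:=\int_0^t\int_{\mathbb R}W(s,x)\,\mu(ds,dx)$; "$\equiv0$" means identically zero up to evanescence. Set $Y_t:=X_t-b(t)$, $\tau:=\inf\{t\ge0:Y_t\ge0\}$ ($\inf\emptyset=\infty$), and $J_0:=\{\tau<\infty,\,Y_{\tau-}<0,\,Y_\tau=0\}$. *)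

theory Defs
  imports "HOL-Probability.Probability"
begin

text \<open>Time set is [0,oo); processes are indexed by real t, only t \<ge> 0 matters.
  A process is a function X :: real => 'a => real (time first, then omega).\<close>

definition usual_conditions :: "'a measure \<Rightarrow> (real \<Rightarrow> 'a measure) \<Rightarrow> bool" where
  "usual_conditions M F \<longleftrightarrow>
     (\<forall>t. space (F t) = space M \<and> sets (F t) \<subseteq> sets M) \<and>
     (\<forall>s t. s \<le> t \<longrightarrow> sets (F s) \<subseteq> sets (F t)) \<and>
     (\<forall>N \<in> null_sets M. \<forall>A. A \<subseteq> N \<longrightarrow> A \<in> sets M) \<and>
     (null_sets M \<subseteq> sets (F 0)) \<and>
     (\<forall>t\<ge>0. sets (F t) = (\<Inter>s\<in>{t<..}. sets (F s)))"

definition adapted :: "(real \<Rightarrow> 'a measure) \<Rightarrow> (real \<Rightarrow> 'a \<Rightarrow> real) \<Rightarrow> bool" where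
  "adapted F X \<longleftrightarrow> (\<forall>t\<ge>0. X t \<in> borel_measurable (F t))"

definition cadlag :: "'a measure \<Rightarrow> (real \<Rightarrow> 'a \<Rightarrow> real) \<Rightarrow> bool" where
  "cadlag M X \<longleftrightarrow> (\<forall>\<omega>\<in>space M. \<forall>t\<ge>0.
      continuous (at_right t) (\<lambda>s. X s \<omega>) \<and>
      (t > 0 \<longrightarrow> (\<exists>l. ((\<lambda>s. X s \<omega>) \<longlongrightarrow> l) (at_left t))))"

definition left_lim :: "(real \<Rightarrow> real) \<Rightarrow> real \<Rightarrow> real" where
  "left_lim f t = (if t \<le> 0 then f 0 else Lim (at_left t) f)"

definition Xminus :: "(real \<Rightarrow> 'a \<Rightarrow> real) \<Rightarrow> real \<Rightarrow> 'a \<Rightarrow> real" where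
  "Xminus X t \<omega> = left_lim (\<lambda>s. X s \<omega>) t"

definition jump :: "(real \<Rightarrow> 'a \<Rightarrow> real) \<Rightarrow> real \<Rightarrow> 'a \<Rightarrow> real" where
  "jump X t \<omega> = X t \<omega> - Xminus X t \<omega>"

definition martingale :: "'a measure \<Rightarrow> (real \<Rightarrow> 'a measure) \<Rightarrow> (real \<Rightarrow> 'a \<Rightarrow> real) \<Rightarrow> bool" where
  "martingale M F X \<longleftrightarrow> adapted F X \<and> (\<forall>t\<ge>0. integrable M (X t)) \<and>
     (\<forall>s t. 0 \<le> s \<and> s \<le> t \<longrightarrow> (AE \<omega> in M. real_cond_exp M (F s) (X t) \<omega> = X s \<omega>))"

definition local_martingale :: "'a measure \<Rightarrow> (real \<Rightarrow> 'a measure) \<Rightarrow> (real \<Rightarrow> 'a \<Rightarrow> real) \<Rightarrow> bool" where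
  "local_martingale M F L \<longleftrightarrow> adapted F L \<and> cadlag M L \<and>
     (\<exists>T :: nat \<Rightarrow> 'a \<Rightarrow> real.
        (\<forall>n. stopping_time F (T n) \<and> (\<forall>\<omega>\<in>space M. 0 \<le> T n \<omega>)) \<and>
        (AE \<omega> in M. mono (\<lambda>n. T n \<omega>) \<and> filterlim (\<lambda>n. T n \<omega>) at_top sequentially) \<and>
        (\<forall>n. martingale M F (\<lambda>t \<omega>. L (min t (T n \<omega>)) \<omega>)))"

definition bounded_variation_on :: "(real \<Rightarrow> real) \<Rightarrow> real \<Rightarrow> real \<Rightarrow> bool" where
  "bounded_variation_on f a b \<longleftrightarrow> (\<exists>B. \<forall>ts. sorted ts \<and> set ts \<subseteq> {a..b} \<longrightarrow>
      (\<Sum>i<length ts - 1. \<bar>f (ts ! Suc i) - f (ts ! i)\<bar>) \<le> B)"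

definition fv_process :: "'a measure \<Rightarrow> (real \<Rightarrow> 'a measure) \<Rightarrow> (real \<Rightarrow> 'a \<Rightarrow> real) \<Rightarrow> bool" where
  "fv_process M F A \<longleftrightarrow> adapted F A \<and> cadlag M A \<and>
     (\<forall>\<omega>\<in>space M. \<forall>t\<ge>0. bounded_variation_on (\<lambda>s. A s \<omega>) 0 t)"

definition semimartingale :: "'a measure \<Rightarrow> (real \<Rightarrow> 'a measure) \<Rightarrow> (real \<Rightarrow> 'a \<Rightarrow> real) \<Rightarrow> bool" where
  "semimartingale M F X \<longleftrightarrow> adapted F X \<and> cadlag M X \<and>
     (\<exists>L A. local_martingale M F L \<and> fv_process M F A \<and>
        (\<forall>\<omega>\<in>space M. L 0 \<omega> = 0 \<and> A 0 \<omega> = 0) \<and>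
        (\<forall>t\<ge>0. \<forall>\<omega>\<in>space M. X t \<omega> = X 0 \<omega> + L t \<omega> + A t \<omega>))"

definition pred_sigma :: "'a measure \<Rightarrow> (real \<Rightarrow> 'a measure) \<Rightarrow> ('a \<times> real) measure" where
  "pred_sigma M F = sigma (space M \<times> {0..})
     ({A \<times> {0} | A. A \<in> sets (F 0)} \<union>
      {A \<times> {s<..t} | A s t. 0 \<le> s \<and> s \<le> t \<and> A \<in> sets (F s)})"

definition predictable_process :: "'a measure \<Rightarrow> (real \<Rightarrow> 'a measure) \<Rightarrow> (real \<Rightarrow> 'a \<Rightarrow> 'b::topological_space) \<Rightarrow> bool" where
  "predictable_process M F Z \<longleftrightarrow> (\<lambda>(\<omega>, t). Z t \<omega>) \<in> borel_measurable (pred_sigma M F)"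

definition Ptilde_measurable :: "'a measure \<Rightarrow> (real \<Rightarrow> 'a measure) \<Rightarrow> ('a \<Rightarrow> real \<Rightarrow> real \<Rightarrow> ennreal) \<Rightarrow> bool" where
  "Ptilde_measurable M F W \<longleftrightarrow>
     (\<lambda>((\<omega>, t), x). W \<omega> t x) \<in> borel_measurable (pred_sigma M F \<Otimes>\<^sub>M (borel :: real measure))"

text \<open>(W * mu^X) over the time set I: sum over jump times s > 0 in I.\<close>
definition int_mu :: "(real \<Rightarrow> 'a \<Rightarrow> real) \<Rightarrow> ('a \<Rightarrow> real \<Rightarrow> real \<Rightarrow> ennreal) \<Rightarrow> real set \<Rightarrow> 'a \<Rightarrow> ennreal" where
  "int_mu X W I \<omega> = (\<integral>\<^sup>+ s. indicator {s \<in> I. 0 < s \<and> jump X s \<omega> \<noteq> 0} s * W \<omega> s (jump X s \<omega>)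
                        \<partial>count_space UNIV)"

definition int_nu :: "('a \<Rightarrow> (real \<times> real) measure) \<Rightarrow> ('a \<Rightarrow> real \<Rightarrow> real \<Rightarrow> ennreal) \<Rightarrow> real set \<Rightarrow> 'a \<Rightarrow> ennreal" where
  "int_nu \<nu> W I \<omega> = (\<integral>\<^sup>+ z. indicator (I \<times> UNIV) z * W \<omega> (fst z) (snd z) \<partial>\<nu> \<omega>)"

text \<open>nu is the predictable compensator of the jump measure mu^X (Jacod--Shiryaev II.1.8).\<close>
definition is_compensator :: "'a measure \<Rightarrow> (real \<Rightarrow> 'a measure) \<Rightarrow> (real \<Rightarrow> 'a \<Rightarrow> real) \<Rightarrow> ('a \<Rightarrow> (real \<times> real) measure) \<Rightarrow> bool" where
  "is_compensator M F X \<nu> \<longleftrightarrow>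
     (\<forall>\<omega>\<in>space M. sets (\<nu> \<omega>) = sets (borel :: (real \<times> real) measure) \<and>
                   emeasure (\<nu> \<omega>) ({..0} \<times> UNIV) = 0) \<and>
     (\<forall>W. Ptilde_measurable M F W \<longrightarrow>
        predictable_process M F (\<lambda>t \<omega>. int_nu \<nu> W {0..t} \<omega>) \<and>
        (\<integral>\<^sup>+ \<omega>. int_mu X W {0..} \<omega> \<partial>M) = (\<integral>\<^sup>+ \<omega>. int_nu \<nu> W {0..} \<omega> \<partial>M))"

definition Gamma0 :: "(real \<Rightarrow> 'a \<Rightarrow> real) \<Rightarrow> (real \<Rightarrow> real) \<Rightarrow> ('a \<times> real \<times> real) set" where
  "Gamma0 X b = {(\<omega>, t, x). Xminus X t \<omega> < b t \<and> x = b t - Xminus X t \<omega>}"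

definition hit_set :: "(real \<Rightarrow> 'a \<Rightarrow> real) \<Rightarrow> (real \<Rightarrow> real) \<Rightarrow> 'a \<Rightarrow> real set" where
  "hit_set X b \<omega> = {t. 0 \<le> t \<and> X t \<omega> - b t \<ge> 0}"

definition tau :: "(real \<Rightarrow> 'a \<Rightarrow> real) \<Rightarrow> (real \<Rightarrow> real) \<Rightarrow> 'a \<Rightarrow> ereal" where
  "tau X b \<omega> = (if hit_set X b \<omega> = {} then \<infinity> else ereal (Inf (hit_set X b \<omega>)))"

definition J0 :: "'a measure \<Rightarrow> (real \<Rightarrow> 'a \<Rightarrow> real) \<Rightarrow> (real \<Rightarrow> real) \<Rightarrow> 'a set" where
  "J0 M X b = {\<omega> \<in> space M. tau X b \<omega> < \<infinity> \<and>
      (let T = real_of_ereal (tau X b \<omega>) in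
         left_lim (\<lambda>t. X t \<omega> - b t) T < 0 \<and> X T \<omega> - b T = 0)}"

definition dA :: "(real \<Rightarrow> 'a \<Rightarrow> real) \<Rightarrow> 'a \<Rightarrow> real measure" where
  "dA A \<omega> = interval_measure (\<lambda>t. A (max t 0) \<omega>)"

definition predictable_disintegration :: "'a measure \<Rightarrow> (real \<Rightarrow> 'a measure) \<Rightarrow> ('a \<Rightarrow> (real \<times> real) measure)
     \<Rightarrow> (real \<Rightarrow> 'a \<Rightarrow> real) \<Rightarrow> ('a \<Rightarrow> real \<Rightarrow> real measure) \<Rightarrow> bool" where
  "predictable_disintegration M F \<nu> A K \<longleftrightarrow>
     \<comment> \<open>A predictable increasing (cadlag, nondecreasing, A_0 = 0) process\<close>
     predictable_process M F A \<and> cadlag M A \<and>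
     (\<forall>\<omega>\<in>space M. mono_on {0..} (\<lambda>t. A t \<omega>) \<and> A 0 \<omega> = 0) \<and>
     \<comment> \<open>K a predictable kernel from (Omega x [0,oo), P) to (R, Borel)\<close>
     (\<forall>\<omega>\<in>space M. \<forall>t\<ge>0. sets (K \<omega> t) = sets (borel :: real measure)) \<and>
     (\<forall>B\<in>sets (borel :: real measure). (\<lambda>(\<omega>, t). emeasure (K \<omega> t) B) \<in> borel_measurable (pred_sigma M F)) \<and>
     \<comment> \<open>the disintegration\<close>
     (\<forall>\<omega>\<in>space M. \<forall>C\<in>sets (borel :: (real \<times> real) measure).
        emeasure (\<nu> \<omega>) C = (\<integral>\<^sup>+ t. indicator {0..} t * emeasure (K \<omega> t) (Pair t -` C) \<partial>dA A \<omega>)) \<and>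
     \<comment> \<open>K(omega,t,.) is diffuse for P (x) dA - a.e. (omega,t)\<close>
     (\<integral>\<^sup>+ \<omega>. (\<integral>\<^sup>+ t. indicator {t. 0 \<le> t \<and> \<not> (\<forall>x. emeasure (K \<omega> t) {x} = 0)} t \<partial>dA A \<omega>) \<partial>M) = 0"

end

theory Submission
  imports Defs
begin

definition filt_ok :: "'a measure \<Rightarrow> (real \<Rightarrow> 'a measure) \<Rightarrow> bool" where
  "filt_ok M F \<longleftrightarrow> (\<forall>t. space (F t) = space M \<and> sets (F t) \<subseteq> sets M)"

definition pred_gen :: "'a measure \<Rightarrow> (real \<Rightarrow> 'a measure) \<Rightarrow> ('a \<times> real) set set" where
  "pred_gen M F = ({A \<times> {0} | A. A \<in> sets (F 0)} \<union>
      {A \<times> {s<..t} | A s t. 0 \<le> s \<and> s \<le> t \<and> A \<in> sets (F s)})"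

lemma pred_sigma_alt: "pred_sigma M F = sigma (space M \<times> {0..}) (pred_gen M F)"
  unfolding pred_sigma_def pred_gen_def by simp

lemma pred_gen_Pow: "filt_ok M F \<Longrightarrow> pred_gen M F \<subseteq> Pow (space M \<times> {0..})"
  unfolding pred_gen_def filt_ok_def
  by (auto dest!: sets.sets_into_space)

lemma space_pred: "space (pred_sigma M F) = space M \<times> {0..}"
  unfolding pred_sigma_def by (rule space_measure_of_conv)

lemma sets_pred: "filt_ok M F \<Longrightarrow> sets (pred_sigma M F) = sigma_sets (space M \<times> {0..}) (pred_gen M F)"
  unfolding pred_sigma_alt by (rule sets_measure_of[OF pred_gen_Pow])

lemma pred_gen_in: "filt_ok M F \<Longrightarrow> G \<in> pred_gen M F \<Longrightarrow> G \<in> sets (pred_sigma M F)"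
  using sets_pred by auto

lemma pred_gen_Ioc: "filt_ok M F \<Longrightarrow> A \<in> sets (F s) \<Longrightarrow> 0 \<le> s \<Longrightarrow> s \<le> t \<Longrightarrow> A \<times> {s<..t} \<in> sets (pred_sigma M F)"
  by (rule pred_gen_in) (auto simp: pred_gen_def)

lemma pred_gen_0: "filt_ok M F \<Longrightarrow> A \<in> sets (F 0) \<Longrightarrow> A \<times> {0} \<in> sets (pred_sigma M F)"
  by (rule pred_gen_in) (auto simp: pred_gen_def)

lemma sec_omega:
  assumes "filt_ok M F" "0 \<le> t"
  shows "(\<lambda>\<omega>. (\<omega>, t)) \<in> measurable M (pred_sigma M F)"
  unfolding pred_sigma_alt
proof (rule measurable_measure_of[OF pred_gen_Pow[OF assms(1)]])
  show "(\<lambda>\<omega>. (\<omega>, t)) \<in> space M \<rightarrow> space M \<times> {0..}" using assms by auto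
next
  fix y assume "y \<in> pred_gen M F"
  then consider A where "y = A \<times> {0}" "A \<in> sets (F 0)"
    | A s t' where "y = A \<times> {s<..t'}" "0 \<le> s" "s \<le> t'" "A \<in> sets (F s)"
    unfolding pred_gen_def by blast
  then show "(\<lambda>\<omega>. (\<omega>, t)) -` y \<inter> space M \<in> sets M"
  proof cases
    case 1
    have "A \<in> sets M" using 1 assms(1) unfolding filt_ok_def by auto
    then have "A \<inter> space M \<in> sets M" by auto
    then show ?thesis using 1 by (cases "t = 0") auto
  next
    case 2
    have "A \<in> sets M" using 2 assms(1) unfolding filt_ok_def by auto
    then have "A \<inter> space M \<in> sets M" by auto
    then show ?thesis using 2 by (cases "s < t \<and> t \<le> t'") auto
  qed
qed

lemma sec_time:
  assumes "filt_ok M F" "\<omega> \<in> space M"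
  shows "(\<lambda>t. (\<omega>, t)) \<in> measurable (restrict_space borel {0..}) (pred_sigma M F)"
  unfolding pred_sigma_alt
proof (rule measurable_measure_of[OF pred_gen_Pow[OF assms(1)]])
  show "(\<lambda>t. (\<omega>, t)) \<in> space (restrict_space borel {0..}) \<rightarrow> space M \<times> {0..}" using assms by (auto simp: space_restrict_space)
next
  fix y assume "y \<in> pred_gen M F"
  then consider A where "y = A \<times> {0}" "A \<in> sets (F 0)"
    | A s t' where "y = A \<times> {s<..t'}" "0 \<le> s" "s \<le> t'" "A \<in> sets (F s)"
    unfolding pred_gen_def by blast
  then show "(\<lambda>t. (\<omega>, t)) -` y \<inter> space (restrict_space borel {0..}) \<in> sets (restrict_space borel {0..})"
  proof cases
    case 1
    show ?thesis using 1 by (cases "\<omega> \<in> A") (auto simp: sets_restrict_space_iff)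
  next
    case 2
    have e: "(\<lambda>t. (\<omega>, t)) -` y \<inter> space (restrict_space borel {0..}) = (if \<omega> \<in> A then {s<..t'} else {})"
      using 2 by auto
    show ?thesis unfolding e using 2 by (auto simp: sets_restrict_space_iff)
  qed
qed

definition approx :: "nat \<Rightarrow> (real \<Rightarrow> 'a \<Rightarrow> real) \<Rightarrow> 'a \<Rightarrow> real \<Rightarrow> real" where
  "approx n Z \<omega> t = (if t \<le> 0 then Z 0 \<omega> else Z ((real_of_int \<lceil>real n * t\<rceil> - 1) / real n) \<omega>)"

lemma ceil_piece:
  assumes "0 < n" "0 < t"
  shows "(real_of_int \<lceil>real n * t\<rceil> - 1) / real n = real (nat (\<lceil>real n * t\<rceil> - 1)) / real n"
    and "real (nat (\<lceil>real n * t\<rceil> - 1)) / real n < t"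
    and "t \<le> (real (nat (\<lceil>real n * t\<rceil> - 1)) + 1) / real n"
proof -
  have p: "0 < real n * t" using assms by simp
  then have "0 < \<lceil>real n * t\<rceil>" by simp
  then have c1: "1 \<le> \<lceil>real n * t\<rceil>" by linarith
  have e: "real (nat (\<lceil>real n * t\<rceil> - 1)) = real_of_int \<lceil>real n * t\<rceil> - 1" using c1 by simp
  show "(real_of_int \<lceil>real n * t\<rceil> - 1) / real n = real (nat (\<lceil>real n * t\<rceil> - 1)) / real n" using e by simp
  have a: "real_of_int \<lceil>real n * t\<rceil> - 1 < real n * t" by linarith
  have b: "real n * t \<le> real_of_int \<lceil>real n * t\<rceil>" by linarith
  show "real (nat (\<lceil>real n * t\<rceil> - 1)) / real n < t" unfolding e using a assms
    by (simp add: divide_less_eq mult.commute)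
  show "t \<le> (real (nat (\<lceil>real n * t\<rceil> - 1)) + 1) / real n" unfolding e using b assms
    by (simp add: le_divide_eq mult.commute)
qed

lemma ceil_piece_inv:
  assumes "0 < n" "real k / real n < t" "t \<le> (real k + 1) / real n"
  shows "\<lceil>real n * t\<rceil> = int k + 1"
proof -
  have "real k < real n * t" using assms by (simp add: divide_less_eq mult.commute)
  moreover have "real n * t \<le> real k + 1" using assms by (simp add: le_divide_eq mult.commute)
  ultimately show ?thesis by (subst ceiling_eq_iff) auto
qed

lemma adapted_sets:
  assumes "filt_ok M F" "Z s \<in> borel_measurable (F s)" "B \<in> sets borel"
  shows "{\<omega> \<in> space M. Z s \<omega> \<in> B} \<in> sets (F s)"
proof -
  have "Z s -` B \<inter> space (F s) \<in> sets (F s)" using assms(2,3) by (rule measurable_sets)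
  moreover have "Z s -` B \<inter> space (F s) = {\<omega> \<in> space M. Z s \<omega> \<in> B}"
    using assms(1) unfolding filt_ok_def by auto
  ultimately show ?thesis by simp
qed

lemma approx_meas:
  assumes filt: "filt_ok M F" and adapt: "\<forall>t\<ge>0. Z t \<in> borel_measurable (F t)" and n: "0 < n"
  shows "(\<lambda>(\<omega>, t). approx n Z \<omega> t) \<in> borel_measurable (pred_sigma M F)"
proof (rule measurableI)
  fix B :: "real set" assume B: "B \<in> sets borel"
  define P where "P = ({\<omega>\<in>space M. Z 0 \<omega> \<in> B} \<times> {0}) \<union>
     (\<Union>k::nat. {\<omega> \<in> space M. Z (real k / real n) \<omega> \<in> B} \<times> {real k / real n<..(real k + 1) / real n})"
  have s0: "{\<omega>\<in>space M. Z 0 \<omega> \<in> B} \<times> {0} \<in> sets (pred_sigma M F)"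
    by (rule pred_gen_0[OF filt adapted_sets[OF filt _ B]]) (use adapt in auto)
  have sk: "{\<omega> \<in> space M. Z (real k / real n) \<omega> \<in> B} \<times> {real k / real n<..(real k + 1) / real n}
      \<in> sets (pred_sigma M F)" for k :: nat
    by (rule pred_gen_Ioc[OF filt adapted_sets[OF filt _ B]]) (use adapt in \<open>auto simp: divide_right_mono\<close>)
  have "P \<in> sets (pred_sigma M F)"
    unfolding P_def by (rule sets.Un[OF s0 sets.countable_UN]) (use sk in \<open>simp add: image_subset_iff\<close>)
  moreover have "(\<lambda>(\<omega>, t). approx n Z \<omega> t) -` B \<inter> space (pred_sigma M F) = P"
  proof (intro set_eqI iffI)
    fix z assume z: "z \<in> (\<lambda>(\<omega>, t). approx n Z \<omega> t) -` B \<inter> space (pred_sigma M F)"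
    obtain \<omega> t where zz: "z = (\<omega>, t)" by force
    have sp: "\<omega> \<in> space M" "0 \<le> t" using z zz by (auto simp: space_pred)
    show "z \<in> P"
    proof (cases "t = 0")
      case True then show ?thesis using z zz sp by (auto simp: P_def approx_def)
    next
      case False
      then have t: "0 < t" using sp by simp
      let ?k = "nat (\<lceil>real n * t\<rceil> - 1)"
      have "Z (real ?k / real n) \<omega> \<in> B" using z zz t ceil_piece(1)[OF n t] by (auto simp: approx_def)
      then show ?thesis using ceil_piece(2,3)[OF n t] sp unfolding P_def zz
        by (intro UnI2 UN_I[of ?k]) auto
    qed
  next
    fix z assume z: "z \<in> P"
    obtain \<omega> t where zz: "z = (\<omega>, t)" by force
    show "z \<in> (\<lambda>(\<omega>, t). approx n Z \<omega> t) -` B \<inter> space (pred_sigma M F)"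
    proof (cases "t = 0")
      case True
    then have "\<omega> \<in> space M" "Z 0 \<omega> \<in> B"
      using z zz unfolding P_def by (auto simp: divide_less_0_iff)
    then show ?thesis using zz True by (auto simp: approx_def space_pred)
    next
      case False
      then obtain k :: nat where k: "\<omega> \<in> space M" "Z (real k / real n) \<omega> \<in> B"
        "real k / real n < t" "t \<le> (real k + 1) / real n"
        using z zz unfolding P_def by auto
      have t: "0 < t" using k(3) by (metis divide_nonneg_nonneg of_nat_0_le_iff order_le_less_trans)
      have "\<lceil>real n * t\<rceil> = int k + 1" by (rule ceil_piece_inv[OF n k(3,4)])
      then show ?thesis using k t zz by (auto simp: approx_def space_pred)
    qed
  qed
  ultimately show "(\<lambda>(\<omega>, t). approx n Z \<omega> t) -` B \<inter> space (pred_sigma M F) \<in> sets (pred_sigma M F)"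
    by (simp only:)
qed (simp add: space_borel)

lemma grid_at_left:
  assumes t: "0 < t"
  shows "filterlim (\<lambda>i. (real_of_int \<lceil>real (Suc i) * t\<rceil> - 1) / real (Suc i)) (at_left t) sequentially"
proof -
  define s where "s i = (real_of_int \<lceil>real (Suc i) * t\<rceil> - 1) / real (Suc i)" for i
  have n: "0 < Suc i" for i by simp
  have lt: "s i < t" for i using ceil_piece(1,2)[OF n t, of i] unfolding s_def by simp
  have ge: "t - 1 / real (Suc i) \<le> s i" for i
  proof -
    have "t \<le> (real (nat (\<lceil>real (Suc i) * t\<rceil> - 1)) + 1) / real (Suc i)" by (rule ceil_piece(3)[OF n t])
    then have "t \<le> s i + 1 / real (Suc i)" unfolding s_def ceil_piece(1)[OF n t, of i]
      by (simp add: add_divide_distrib)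
    then show ?thesis by simp
  qed
  have l1: "(\<lambda>i. t - 1 / real (Suc i)) \<longlonglongrightarrow> t"
    using tendsto_diff[OF tendsto_const LIMSEQ_inverse_real_of_nat, of t]
    by (simp add: inverse_eq_divide)
  have "s \<longlonglongrightarrow> t"
    by (rule tendsto_sandwich[OF _ _ l1 tendsto_const[of t]]) (use lt ge in \<open>auto intro!: always_eventually less_imp_le\<close>)
  moreover have "\<forall>\<^sub>F i in sequentially. s i \<in> {..<t} \<and> s i \<noteq> t" using lt by (auto intro!: always_eventually)
  ultimately show ?thesis unfolding s_def[symmetric] by (simp add: filterlim_at)
qed

lemma pred_leftlim:
  fixes Z G :: "real \<Rightarrow> 'a \<Rightarrow> real"
  assumes filt: "filt_ok M F" and adapt: "\<forall>t\<ge>0. Z t \<in> borel_measurable (F t)"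
    and lim: "\<And>\<omega> t. \<omega> \<in> space M \<Longrightarrow> 0 < t \<Longrightarrow> ((\<lambda>s. Z s \<omega>) \<longlongrightarrow> G t \<omega>) (at_left t)"
    and G0: "\<And>\<omega>. \<omega> \<in> space M \<Longrightarrow> G 0 \<omega> = Z 0 \<omega>"
  shows "(\<lambda>(\<omega>, t). G t \<omega>) \<in> borel_measurable (pred_sigma M F)"
proof (rule borel_measurable_LIMSEQ_real[where u="\<lambda>i (\<omega>, t). approx (Suc i) Z \<omega> t"])
  fix i show "(\<lambda>(\<omega>, t). approx (Suc i) Z \<omega> t) \<in> borel_measurable (pred_sigma M F)"
    by (rule approx_meas[OF filt adapt]) simp
next
  fix x assume x: "x \<in> space (pred_sigma M F)"
  obtain \<omega> t where xx: "x = (\<omega>, t)" by force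
  have sp: "\<omega> \<in> space M" "0 \<le> t" using x xx by (auto simp: space_pred)
  show "(\<lambda>i. case x of (\<omega>, t) \<Rightarrow> approx (Suc i) Z \<omega> t) \<longlonglongrightarrow> (case x of (\<omega>, t) \<Rightarrow> G t \<omega>)"
  proof (cases "t = 0")
    case True then show ?thesis using xx G0[OF sp(1)] by (simp add: approx_def)
  next
    case False
    then have t: "0 < t" using sp by simp
    have "(\<lambda>i. Z ((real_of_int \<lceil>real (Suc i) * t\<rceil> - 1) / real (Suc i)) \<omega>) \<longlonglongrightarrow> G t \<omega>"
      using filterlim_compose[OF lim[OF sp(1) t] grid_at_left[OF t]] .
    then show ?thesis using xx t by (simp add: approx_def o_def)
  qed
qed

lemma pred_sec_omega:
  assumes "filt_ok M F" "f \<in> borel_measurable (pred_sigma M F)" "0 \<le> t"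
  shows "(\<lambda>\<omega>. f (\<omega>, t)) \<in> borel_measurable M"
  using measurable_comp[OF sec_omega[OF assms(1,3)] assms(2)] by (simp add: o_def)

lemma pred_sec_time:
  assumes "filt_ok M F" "f \<in> borel_measurable (pred_sigma M F)" "\<omega> \<in> space M"
  shows "(\<lambda>t. f (\<omega>, t)) \<in> borel_measurable (restrict_space borel {0..})"
  using measurable_comp[OF sec_time[OF assms(1,3)] assms(2)] by (simp add: o_def)

lemma uc_filt: "usual_conditions M F \<Longrightarrow> filt_ok M F"
  unfolding usual_conditions_def filt_ok_def by auto

lemma Xminus_tendsto:
  assumes "cadlag M X" "\<omega> \<in> space M" "0 < t"
  shows "((\<lambda>s. X s \<omega>) \<longlongrightarrow> Xminus X t \<omega>) (at_left t)"
proof -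
  obtain l where l: "((\<lambda>s. X s \<omega>) \<longlongrightarrow> l) (at_left t)" using assms unfolding cadlag_def by (meson less_imp_le)
  have "Xminus X t \<omega> = l" using assms(3) tendsto_Lim[OF trivial_limit_at_left_real l]
    by (simp add: Xminus_def left_lim_def)
  then show ?thesis using l by simp
qed

lemma Xminus_0: "t \<le> 0 \<Longrightarrow> Xminus X t \<omega> = X 0 \<omega>"
  by (simp add: Xminus_def left_lim_def)

lemma Xminus_pred:
  assumes "filt_ok M F" "adapted F X" "cadlag M X"
  shows "(\<lambda>(\<omega>, t). Xminus X t \<omega>) \<in> borel_measurable (pred_sigma M F)"
  by (rule pred_leftlim[OF assms(1)]) (use assms in \<open>auto simp: adapted_def Xminus_tendsto Xminus_0\<close>)

lemma b_pred:
  fixes b :: "real \<Rightarrow> real"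
  assumes "filt_ok M F" "continuous_on {0..} b"
  shows "(\<lambda>(\<omega>, t). b t) \<in> borel_measurable (pred_sigma M F)"
proof -
  have lim: "((\<lambda>s. b s) \<longlongrightarrow> b t) (at_left t)" if t: "0 < t" for t
  proof -
    have "(b \<longlongrightarrow> b t) (at t within {0..})"
      using assms(2) t by (simp add: continuous_on_def)
    then have "(b \<longlongrightarrow> b t) (at t within {0..t})"
      by (rule tendsto_within_subset) auto
    then show ?thesis using at_within_Icc_at_left[OF t] by simp
  qed
  show ?thesis
    using pred_leftlim[of M F "\<lambda>t \<omega>. b t" "\<lambda>t \<omega>. b t"] assms(1) lim by simp
qed


lemma W0_ptilde:
  fixes X :: "real \<Rightarrow> 'a \<Rightarrow> real" and b :: "real \<Rightarrow> real"
  assumes "filt_ok M F" "adapted F X" "cadlag M X" "continuous_on {0..} b"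
  shows "Ptilde_measurable M F (\<lambda>\<omega> t x. indicator (Gamma0 X b) (\<omega>, t, x))"
proof -
  let ?N = "pred_sigma M F \<Otimes>\<^sub>M (borel :: real measure)"
  have hX[measurable]: "(\<lambda>z. Xminus X (snd (fst z)) (fst (fst z))) \<in> borel_measurable ?N"
    using measurable_comp[OF measurable_fst Xminus_pred[OF assms(1-3)]] by (simp add: o_def case_prod_beta)
  have hb[measurable]: "(\<lambda>z. b (snd (fst z))) \<in> borel_measurable ?N"
    using measurable_comp[OF measurable_fst b_pred[OF assms(1,4)]] by (simp add: o_def case_prod_beta)
  have e: "(\<lambda>((\<omega>, t), x). indicator (Gamma0 X b) (\<omega>, t, x)) =
    (\<lambda>z. if Xminus X (snd (fst z)) (fst (fst z)) < b (snd (fst z)) \<and>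
             snd z = b (snd (fst z)) - Xminus X (snd (fst z)) (fst (fst z)) then 1 else (0::ennreal))"
    by (auto simp: Gamma0_def indicator_def fun_eq_iff)
  show ?thesis unfolding Ptilde_measurable_def e by measurable
qed

lemma b_leftlim:
  fixes b :: "real \<Rightarrow> real"
  assumes "continuous_on {0..} b" "0 < t"
  shows "(b \<longlongrightarrow> b t) (at_left t)"
proof -
  have "(b \<longlongrightarrow> b t) (at t within {0..})"
    using assms by (simp add: continuous_on_def)
  then have "(b \<longlongrightarrow> b t) (at t within {0..t})"
    by (rule tendsto_within_subset) auto
  then show ?thesis using at_within_Icc_at_left[OF assms(2)] by simp
qed

lemma Y_right:
  fixes X :: "real \<Rightarrow> 'a \<Rightarrow> real" and b :: "real \<Rightarrow> real"
  assumes "cadlag M X" "continuous_on {0..} b" "\<omega> \<in> space M" "0 \<le> s" "0 < e"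
  shows "\<exists>d>0. \<forall>w. s \<le> w \<and> w < s + d \<longrightarrow> \<bar>(X w \<omega> - b w) - (X s \<omega> - b s)\<bar> < e"
proof -
  have "((\<lambda>w. X w \<omega>) \<longlongrightarrow> X s \<omega>) (at_right s)"
    using assms unfolding cadlag_def continuous_within by auto
  moreover have "(b \<longlongrightarrow> b s) (at_right s)"
  proof -
    have "(b \<longlongrightarrow> b s) (at s within {0..})" using assms by (simp add: continuous_on_def)
    then show ?thesis by (rule tendsto_within_subset) (use assms in auto)
  qed
  ultimately have "((\<lambda>w. X w \<omega> - b w) \<longlongrightarrow> X s \<omega> - b s) (at_right s)"
    by (rule tendsto_diff)
  then have "\<forall>\<^sub>F w in at_right s. dist (X w \<omega> - b w) (X s \<omega> - b s) < e"
    by (rule tendstoD[OF _ assms(5)])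
  then obtain c where c: "c > s" "\<forall>y>s. y < c \<longrightarrow> dist (X y \<omega> - b y) (X s \<omega> - b s) < e"
    using eventually_at_right[of s "s + 1"] by auto
  show ?thesis
  proof (intro exI[of _ "c - s"] conjI allI impI)
    show "0 < c - s" using c by simp
    fix w assume w: "s \<le> w \<and> w < s + (c - s)"
    show "\<bar>(X w \<omega> - b w) - (X s \<omega> - b s)\<bar> < e"
    proof (cases "w = s")
      case True then show ?thesis using assms by simp
    next
      case False then show ?thesis using c w by (auto simp: dist_real_def)
    qed
  qed
qed

lemma Y_left:
  fixes X :: "real \<Rightarrow> 'a \<Rightarrow> real" and b :: "real \<Rightarrow> real"
  assumes "cadlag M X" "continuous_on {0..} b" "\<omega> \<in> space M" "0 \<le> s" "0 < e"
  shows "\<exists>d>0. \<forall>w. s - d < w \<and> w < s \<and> 0 \<le> w \<longrightarrow> \<bar>(X w \<omega> - b w) - (Xminus X s \<omega> - b s)\<bar> < e"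
proof (cases "s = 0")
  case True then show ?thesis by (intro exI[of _ 1]) auto
next
  case False
  then have s: "0 < s" using assms by simp
  have "((\<lambda>w. X w \<omega> - b w) \<longlongrightarrow> Xminus X s \<omega> - b s) (at_left s)"
    by (rule tendsto_diff[OF Xminus_tendsto[OF assms(1,3) s] b_leftlim[OF assms(2) s]])
  then have "\<forall>\<^sub>F w in at_left s. dist (X w \<omega> - b w) (Xminus X s \<omega> - b s) < e"
    by (rule tendstoD[OF _ assms(5)])
  then obtain c where c: "c < s" "\<forall>y>c. y < s \<longrightarrow> dist (X y \<omega> - b y) (Xminus X s \<omega> - b s) < e"
    using eventually_at_left[of "s - 1" s] by auto
  show ?thesis
    by (intro exI[of _ "s - c"] conjI allI impI) (use c in \<open>auto simp: dist_real_def\<close>)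
qed

definition Echar :: "(real \<Rightarrow> 'a \<Rightarrow> real) \<Rightarrow> (real \<Rightarrow> real) \<Rightarrow> 'a \<Rightarrow> bool" where
  "Echar X b \<omega> \<longleftrightarrow> (\<exists>i::nat. \<exists>N::nat. \<forall>j::nat. \<exists>n::nat. \<exists>k::nat. j \<le> n \<and>
     (real k + 1) / 2 ^ n \<le> real N \<and>
     X (real k / 2 ^ n) \<omega> - b (real k / 2 ^ n) \<le> - inverse (real (Suc i)) \<and>
     \<bar>X ((real k + 1) / 2 ^ n) \<omega> - b ((real k + 1) / 2 ^ n)\<bar> \<le> inverse (real (Suc j)))"

lemma E_fwd:
  fixes X :: "real \<Rightarrow> 'a \<Rightarrow> real" and b :: "real \<Rightarrow> real"
  assumes cad: "cadlag M X" and cb: "continuous_on {0..} b" and om: "\<omega> \<in> space M"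
    and s: "0 < s" and h1: "Xminus X s \<omega> < b s" and h2: "X s \<omega> = b s"
  shows "Echar X b \<omega>"
proof -
  define Y where "Y w = X w \<omega> - b w" for w
  define L where "L = Xminus X s \<omega> - b s"
  have L: "L < 0" using h1 by (simp add: L_def)
  obtain i where i: "inverse (real (Suc i)) < - L / 2" using reals_Archimedean[of "- L / 2"] L by auto
  obtain N :: nat where N: "s + 1 \<le> real N" using real_arch_simple[of "s + 1"] by auto
  obtain d1 where d1: "d1 > 0" "\<forall>w. s - d1 < w \<and> w < s \<and> 0 \<le> w \<longrightarrow> \<bar>Y w - L\<bar> < - L / 2"
    using Y_left[OF cad cb om _, of s "- L / 2"] s L unfolding Y_def L_def by auto
  show ?thesis unfolding Echar_def
  proof (rule exI[of _ i], rule exI[of _ N], rule allI)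
    fix j :: nat
    obtain d2 where d2: "d2 > 0" "\<forall>w. s \<le> w \<and> w < s + d2 \<longrightarrow> \<bar>Y w - Y s\<bar> < inverse (real (Suc j))"
      using Y_right[OF cad cb om _, of s "inverse (real (Suc j))"] s unfolding Y_def by auto
    have Ys: "Y s = 0" using h2 by (simp add: Y_def)
    obtain n0 :: nat where n0: "1 / min d1 d2 < 2 ^ n0" using real_arch_pow[of 2 "1 / min d1 d2"] by auto
    define n where "n = max j n0"
    have "(2::real) ^ n0 \<le> 2 ^ n" unfolding n_def by (rule power_increasing) auto
    then have "1 / min d1 d2 < 2 ^ n" using n0 by linarith
    define m where "m = min d1 d2"
    have m0: "0 < m" using d1(1) d2(1) by (simp add: m_def)
    have "1 / m < 2 ^ n" using \<open>1 / min d1 d2 < 2 ^ n\<close> by (simp add: m_def)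
    then have "1 < m * 2 ^ n" using m0 by (simp add: divide_less_eq mult.commute)
    then have "1 / 2 ^ n < m" by (simp add: divide_less_eq mult.commute)
    then have small: "1 / 2 ^ n < min d1 d2" by (simp add: m_def)
    have small1: "1 / (2::real) ^ n \<le> 1" by simp
    define k where "k = nat (\<lceil>real (2 ^ n :: nat) * s\<rceil> - 1)"
    have pos: "0 < (2 ^ n :: nat)" by simp
    have cp2: "real k / real (2 ^ n :: nat) < s" unfolding k_def by (rule ceil_piece(2)[OF pos s])
    have cp3: "s \<le> (real k + 1) / real (2 ^ n :: nat)" unfolding k_def by (rule ceil_piece(3)[OF pos s])
    have cp2': "real k / 2 ^ n < s" using cp2 by simp
    have cp3': "s \<le> real k / 2 ^ n + 1 / 2 ^ n" using cp3 by (simp add: add_divide_distrib)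
    have vv: "(real k + 1) / 2 ^ n = real k / 2 ^ n + 1 / 2 ^ n" by (simp add: add_divide_distrib)
    have u0: "0 \<le> real k / 2 ^ n" by simp
    have "\<bar>Y (real k / 2 ^ n) - L\<bar> < - L / 2"
      using d1(2) cp2' cp3' small u0 by auto
    then have A: "Y (real k / 2 ^ n) \<le> - inverse (real (Suc i))" using i by linarith
    have "\<bar>Y ((real k + 1) / 2 ^ n) - Y s\<bar> < inverse (real (Suc j))"
      using d2(2) cp2' cp3' small unfolding vv by auto
    then have B: "\<bar>Y ((real k + 1) / 2 ^ n)\<bar> \<le> inverse (real (Suc j))" using Ys by simp
    have C: "(real k + 1) / 2 ^ n \<le> real N" using cp2' small1 N unfolding vv by linarith
    show "\<exists>n k. j \<le> n \<and> (real k + 1) / 2 ^ n \<le> real N \<and>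
          X (real k / 2 ^ n) \<omega> - b (real k / 2 ^ n) \<le> - inverse (real (Suc i)) \<and>
          \<bar>X ((real k + 1) / 2 ^ n) \<omega> - b ((real k + 1) / 2 ^ n)\<bar> \<le> inverse (real (Suc j))"
      using A B C unfolding Y_def by (intro exI[of _ n] exI[of _ k]) (auto simp: n_def)
  qed
qed

lemma E_bwd:
  fixes X :: "real \<Rightarrow> 'a \<Rightarrow> real" and b :: "real \<Rightarrow> real"
  assumes cad: "cadlag M X" and cb: "continuous_on {0..} b" and om: "\<omega> \<in> space M"
    and E: "Echar X b \<omega>"
  shows "\<exists>s>0. Xminus X s \<omega> < b s \<and> X s \<omega> = b s"
proof -
  define Y where "Y w = X w \<omega> - b w" for w
  obtain i N where H: "\<forall>j::nat. \<exists>n::nat. \<exists>k::nat. j \<le> n \<and>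
     (real k + 1) / 2 ^ n \<le> real N \<and> Y (real k / 2 ^ n) \<le> - inverse (real (Suc i)) \<and>
     \<bar>Y ((real k + 1) / 2 ^ n)\<bar> \<le> inverse (real (Suc j))"
    using E unfolding Echar_def Y_def by blast
  define c where "c = inverse (real (Suc i))"
  have c0: "0 < c" by (simp add: c_def)
  obtain nf kf where P: "\<And>j. j \<le> nf j \<and> (real (kf j) + 1) / 2 ^ (nf j) \<le> real N \<and>
     Y (real (kf j) / 2 ^ (nf j)) \<le> - c \<and> \<bar>Y ((real (kf j) + 1) / 2 ^ (nf j))\<bar> \<le> inverse (real (Suc j))"
    using H unfolding c_def by metis
  define u where "u j = real (kf j) / 2 ^ (nf j)" for j
  define v where "v j = (real (kf j) + 1) / 2 ^ (nf j)" for j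
  have uv: "v j = u j + 1 / 2 ^ (nf j)" for j by (simp add: u_def v_def add_divide_distrib)
  have u0: "0 \<le> u j" for j by (simp add: u_def)
  have uN: "u j \<in> {0..real N}" for j using P[of j] u0[of j] uv[of j] unfolding v_def[symmetric]
    by (auto intro: order_trans[of _ "v j"] simp: add_increasing2)
  obtain s r where s: "s \<in> {0..real N}" and r: "strict_mono r" and ur: "(u \<circ> r) \<longlonglongrightarrow> s"
    using compact_imp_seq_compact[OF compact_Icc[of 0 "real N"]] uN unfolding seq_compact_def by metis
  have rj: "j \<le> r j" for j using seq_suble[OF r] .
  have h0: "(\<lambda>j. (1/2::real) ^ j) \<longlonglongrightarrow> 0" by (rule LIMSEQ_realpow_zero) auto
  have h1: "(\<lambda>j. 1 / 2 ^ (nf (r j)) :: real) \<longlonglongrightarrow> 0"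
  proof (rule tendsto_sandwich[OF _ _ tendsto_const h0])
    show "\<forall>\<^sub>F j in sequentially. 0 \<le> 1 / (2::real) ^ (nf (r j))" by simp
    have "1 / (2::real) ^ (nf (r j)) \<le> (1/2) ^ j" for j
    proof -
      have "j \<le> nf (r j)" using rj[of j] P[of "r j"] by linarith
      then have "(2::real) ^ j \<le> 2 ^ (nf (r j))" by (rule power_increasing) auto
      then show ?thesis by (simp add: power_one_over frac_le)
    qed
    then show "\<forall>\<^sub>F j in sequentially. 1 / (2::real) ^ (nf (r j)) \<le> (1/2) ^ j" by simp
  qed
  have vr: "(v \<circ> r) \<longlonglongrightarrow> s" using tendsto_add[OF ur h1] by (simp add: o_def uv)
  have ir: "(\<lambda>j. inverse (real (Suc (r j)))) \<longlonglongrightarrow> 0"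
  proof (rule tendsto_sandwich[OF _ _ tendsto_const LIMSEQ_inverse_real_of_nat])
    show "\<forall>\<^sub>F j in sequentially. 0 \<le> inverse (real (Suc (r j)))" by simp
    show "\<forall>\<^sub>F j in sequentially. inverse (real (Suc (r j))) \<le> inverse (real (Suc j))"
      using rj by (auto intro!: always_eventually le_imp_inverse_le)
  qed
  define L where "L = Xminus X s \<omega> - b s"
  have claim: "0 < s \<and> L < - c + e \<and> \<bar>Y s\<bar> < 2 * e" if e: "0 < e" "e < c / 3" for e
  proof -
    obtain d1 where d1: "d1 > 0" "\<forall>w. s - d1 < w \<and> w < s \<and> 0 \<le> w \<longrightarrow> \<bar>Y w - L\<bar> < e"
      using Y_left[OF cad cb om _ e(1), of s] s unfolding Y_def L_def by auto
    obtain d2 where d2: "d2 > 0" "\<forall>w. s \<le> w \<and> w < s + d2 \<longrightarrow> \<bar>Y w - Y s\<bar> < e"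
      using Y_right[OF cad cb om _ e(1), of s] s unfolding Y_def by auto
    define d where "d = min d1 d2"
    have d0: "0 < d" using d1 d2 by (simp add: d_def)
    have ev1: "\<forall>\<^sub>F j in sequentially. dist ((u \<circ> r) j) s < d" by (rule tendstoD[OF ur d0])
    have ev2: "\<forall>\<^sub>F j in sequentially. dist ((v \<circ> r) j) s < d" by (rule tendstoD[OF vr d0])
    have ev3: "\<forall>\<^sub>F j in sequentially. dist (inverse (real (Suc (r j)))) 0 < e" by (rule tendstoD[OF ir e(1)])
    obtain j where j: "dist (u (r j)) s < d" "dist (v (r j)) s < d" "dist (inverse (real (Suc (r j)))) 0 < e"
      using eventually_happens'[OF sequentially_bot eventually_conj[OF ev1 eventually_conj[OF ev2 ev3]]]
      by auto
    define a where "a = u (r j)"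
    define a' where "a' = v (r j)"
    have Pa: "Y a \<le> - c" "\<bar>Y a'\<bar> \<le> inverse (real (Suc (r j)))"
      using P[of "r j"] by (auto simp: a_def a'_def u_def v_def)
    have Ya': "\<bar>Y a'\<bar> < e" using Pa(2) j(3) by (simp add: dist_real_def)
    have aa': "a < a'" unfolding a_def a'_def uv by simp
    have a0: "0 \<le> a" by (simp add: a_def u0)
    have ad: "\<bar>a - s\<bar> < d" "\<bar>a' - s\<bar> < d" using j by (auto simp: a_def a'_def dist_real_def)
    consider "s \<le> a" | "a' < s" | "a < s" "s \<le> a'" by linarith
    then show ?thesis
    proof cases
      case 1
      have "\<bar>Y a - Y s\<bar> < e" using d2(2) 1 ad by (auto simp: d_def)
      moreover have "\<bar>Y a' - Y s\<bar> < e" using d2(2) 1 aa' ad by (auto simp: d_def)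
      ultimately have False using Pa(1) Ya' e by (auto simp: abs_less_iff)
      then show ?thesis ..
    next
      case 2
      have "\<bar>Y a - L\<bar> < e" using d1(2) 2 aa' ad a0 by (auto simp: d_def)
      moreover have "\<bar>Y a' - L\<bar> < e" using d1(2) 2 aa' ad a0 by (auto simp: d_def)
      ultimately have False using Pa(1) Ya' e by (auto simp: abs_less_iff)
      then show ?thesis ..
    next
      case 3
      have "\<bar>Y a - L\<bar> < e" using d1(2) 3 ad a0 by (auto simp: d_def)
      moreover have "\<bar>Y a' - Y s\<bar> < e" using d2(2) 3 ad by (auto simp: d_def)
      ultimately show ?thesis using Pa(1) Ya' e a0 3 by (auto simp: abs_less_iff)
    qed
  qed
  have s0: "0 < s" using claim[of "c / 6"] c0 by auto
  have L0: "L < 0" using claim[of "c / 6"] c0 by auto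
  have Ys: "Y s = 0"
  proof (rule ccontr)
    assume "Y s \<noteq> 0"
    then have "0 < \<bar>Y s\<bar>" by simp
    define e where "e = min (\<bar>Y s\<bar> / 2) (c / 6)"
    have e0: "0 < e" "e < c / 3" using \<open>0 < \<bar>Y s\<bar>\<close> c0 by (auto simp: e_def)
    have "\<bar>Y s\<bar> < 2 * e" using claim[OF e0] by blast
    moreover have "e \<le> \<bar>Y s\<bar> / 2" by (simp add: e_def)
    ultimately show False by linarith
  qed
  show ?thesis using s0 L0 Ys by (intro exI[of _ s]) (auto simp: L_def Y_def)
qed

lemma adapted_M:
  assumes "filt_ok M F" "adapted F X" "0 \<le> q"
  shows "X q \<in> borel_measurable M"
proof (rule measurable_from_subalg)
  show "subalgebra M (F q)" using assms(1) unfolding filt_ok_def subalgebra_def by auto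
  show "X q \<in> borel_measurable (F q)" using assms(2,3) unfolding adapted_def by auto
qed

lemma E_meas:
  fixes X :: "real \<Rightarrow> 'a \<Rightarrow> real" and b :: "real \<Rightarrow> real"
  assumes "filt_ok M F" "adapted F X"
  shows "{\<omega> \<in> space M. Echar X b \<omega>} \<in> sets M"
proof -
  have [measurable]: "X (real k / 2 ^ n) \<in> borel_measurable M" for k n
    by (rule adapted_M[OF assms]) simp
  have [measurable]: "X ((real k + 1) / 2 ^ n) \<in> borel_measurable M" for k n
    by (rule adapted_M[OF assms]) simp
  show ?thesis unfolding Echar_def by measurable
qed

lemma J0_jump:
  fixes X :: "real \<Rightarrow> 'a \<Rightarrow> real" and b :: "real \<Rightarrow> real"
  assumes cad: "cadlag M X" and cb: "continuous_on {0..} b" and X0: "\<forall>\<omega>\<in>space M. X 0 \<omega> < b 0"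
    and J: "\<omega> \<in> J0 M X b"
  shows "\<exists>s>0. Xminus X s \<omega> < b s \<and> X s \<omega> = b s"
proof -
  define H where "H = hit_set X b \<omega>"
  have om: "\<omega> \<in> space M" using J by (simp add: J0_def)
  have fin: "tau X b \<omega> < \<infinity>" using J by (simp add: J0_def)
  then have Hne: "H \<noteq> {}" by (auto simp: tau_def H_def)
  define T where "T = Inf H"
  have tauT: "real_of_ereal (tau X b \<omega>) = T" using Hne by (simp add: tau_def H_def T_def)
  have J': "left_lim (\<lambda>t. X t \<omega> - b t) T < 0" "X T \<omega> - b T = 0"
    using J tauT by (auto simp: J0_def Let_def)
  have T0: "0 \<le> T" unfolding T_def by (rule cInf_greatest[OF Hne]) (auto simp: H_def hit_set_def)
  have Tpos: "0 < T"
  proof (rule ccontr)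
    assume "\<not> 0 < T"
    then have "T = 0" using T0 by simp
    then show False using J'(2) X0 om by auto
  qed
  have "((\<lambda>t. X t \<omega> - b t) \<longlongrightarrow> Xminus X T \<omega> - b T) (at_left T)"
    by (rule tendsto_diff[OF Xminus_tendsto[OF cad om Tpos] b_leftlim[OF cb Tpos]])
  then have "left_lim (\<lambda>t. X t \<omega> - b t) T = Xminus X T \<omega> - b T"
    using Tpos tendsto_Lim[OF trivial_limit_at_left_real] by (simp add: left_lim_def)
  then show ?thesis using J' Tpos by (intro exI[of _ T]) auto
qed

lemma int_mu_ge1:
  fixes X :: "real \<Rightarrow> 'a \<Rightarrow> real" and b :: "real \<Rightarrow> real"
  assumes s: "0 < s" "Xminus X s \<omega> < b s" "X s \<omega> = b s"
  shows "1 \<le> int_mu X (\<lambda>\<omega> t x. indicator (Gamma0 X b) (\<omega>, t, x)) {0..} \<omega>"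
proof -
  let ?f = "\<lambda>t. indicator {t \<in> {0..}. 0 < t \<and> jump X t \<omega> \<noteq> 0} t *
      (indicator (Gamma0 X b) (\<omega>, t, jump X t \<omega>) :: ennreal)"
  have fs: "?f s = 1" using s by (auto simp: jump_def Gamma0_def indicator_def)
  have "(\<integral>\<^sup>+ t. indicator {s} t \<partial>count_space UNIV) \<le> (\<integral>\<^sup>+ t. ?f t \<partial>count_space UNIV)"
  proof (rule nn_integral_mono)
    fix t show "indicator {s} t \<le> ?f t"
    proof (cases "t = s")
      case True then show ?thesis using fs by simp
    next
      case False then show ?thesis by simp
    qed
  qed
  moreover have "(\<integral>\<^sup>+ t. indicator {s} t \<partial>count_space UNIV) = (1::ennreal)"
    by (simp add: nn_integral_indicator)
  ultimately show ?thesis by (simp add: int_mu_def)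
qed

definition hfun :: "(real \<Rightarrow> 'a \<Rightarrow> real) \<Rightarrow> (real \<Rightarrow> real) \<Rightarrow> 'a \<Rightarrow> real \<times> real \<Rightarrow> ennreal" where
  "hfun X b \<omega> z = indicator {z. 0 \<le> fst z \<and> Xminus X (max (fst z) 0) \<omega> < b (max (fst z) 0) \<and>
       snd z = b (max (fst z) 0) - Xminus X (max (fst z) 0) \<omega>} z"

lemma max0_meas: "(\<lambda>t. max t (0::real)) \<in> measurable borel (restrict_space borel {0..})"
  by (rule measurable_restrict_space2) auto

lemma sec_meas_real:
  assumes "filt_ok M F" "f \<in> borel_measurable (pred_sigma M F)" "\<omega> \<in> space M"
  shows "(\<lambda>t. f (\<omega>, max t 0)) \<in> borel_measurable (borel :: real measure)"
  using measurable_comp[OF max0_meas pred_sec_time[OF assms]] by (simp add: o_def)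

lemma hfun_meas:
  fixes X :: "real \<Rightarrow> 'a \<Rightarrow> real" and b :: "real \<Rightarrow> real"
  assumes "filt_ok M F" "adapted F X" "cadlag M X" "continuous_on {0..} b" "\<omega> \<in> space M"
  shows "hfun X b \<omega> \<in> borel_measurable borel"
proof -
  have m1: "(\<lambda>t. Xminus X (max t 0) \<omega>) \<in> borel_measurable (borel :: real measure)"
    using sec_meas_real[OF assms(1) Xminus_pred[OF assms(1-3)] assms(5)] by simp
  have m2: "(\<lambda>t. b (max t 0)) \<in> borel_measurable (borel :: real measure)"
    using sec_meas_real[OF assms(1) b_pred[OF assms(1,4)] assms(5)] by simp
  have [measurable]: "(\<lambda>z. Xminus X (max (fst z) 0) \<omega>) \<in> borel_measurable ((borel::real measure) \<Otimes>\<^sub>M (borel::real measure))"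
    using measurable_comp[OF measurable_fst[of "borel::real measure" "borel::real measure"] m1] by (simp add: o_def)
  have [measurable]: "(\<lambda>z. b (max (fst z) 0)) \<in> borel_measurable ((borel::real measure) \<Otimes>\<^sub>M (borel::real measure))"
    using measurable_comp[OF measurable_fst[of "borel::real measure" "borel::real measure"] m2] by (simp add: o_def)
  have e: "hfun X b \<omega> = (\<lambda>z. if 0 \<le> fst z \<and> Xminus X (max (fst z) 0) \<omega> < b (max (fst z) 0) \<and>
       snd z = b (max (fst z) 0) - Xminus X (max (fst z) 0) \<omega> then 1 else 0)"
    by (auto simp: hfun_def indicator_def fun_eq_iff)
  have "hfun X b \<omega> \<in> borel_measurable ((borel::real measure) \<Otimes>\<^sub>M (borel::real measure))"
    unfolding e by measurable
  then show ?thesis by (simp add: borel_prod)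
qed

lemma int_nu_hfun:
  assumes "I \<subseteq> {0..}"
  shows "int_nu \<nu> (\<lambda>\<omega> t x. indicator (Gamma0 X b) (\<omega>, t, x)) I \<omega> =
    (\<integral>\<^sup>+ z. indicator (I \<times> UNIV) z * hfun X b \<omega> z \<partial>\<nu> \<omega>)"
  unfolding int_nu_def
proof (rule nn_integral_cong)
  fix z :: "real \<times> real"
  show "indicator (I \<times> UNIV) z * indicator (Gamma0 X b) (\<omega>, fst z, snd z) =
        indicator (I \<times> UNIV) z * hfun X b \<omega> z"
  proof (cases "z \<in> I \<times> UNIV")
    case True
    then have "0 \<le> fst z" using assms by auto
    then show ?thesis using True by (auto simp: hfun_def Gamma0_def indicator_def)
  next
    case False then show ?thesis by simp
  qed
qed

lemma int_nu_full:
  fixes X :: "real \<Rightarrow> 'a \<Rightarrow> real" and b :: "real \<Rightarrow> real"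
  assumes "filt_ok M F" "adapted F X" "cadlag M X" "continuous_on {0..} b" "\<omega> \<in> space M"
    and sets: "sets (\<nu> \<omega>) = sets borel"
    and z: "\<forall>t\<ge>0. int_nu \<nu> (\<lambda>\<omega> t x. indicator (Gamma0 X b) (\<omega>, t, x)) {0..t} \<omega> = 0"
  shows "int_nu \<nu> (\<lambda>\<omega> t x. indicator (Gamma0 X b) (\<omega>, t, x)) {0..} \<omega> = 0"
proof -
  have hm[measurable]: "hfun X b \<omega> \<in> borel_measurable borel" by (rule hfun_meas[OF assms(1-5)])
  have [measurable]: "({0..real n} \<times> UNIV) \<in> sets (borel :: (real \<times> real) measure)" for n
    by (intro borel_closed closed_Times) auto
  define f where "f n z = indicator ({0..real n} \<times> UNIV) z * hfun X b \<omega> z" for n :: nat and z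
  have fm: "f n \<in> borel_measurable (\<nu> \<omega>)" for n
    unfolding f_def measurable_cong_sets[OF sets refl] by measurable
  have inc: "incseq f"
    by (auto simp: incseq_def le_fun_def f_def indicator_def intro!: mult_right_mono)
  have sup: "(SUP n. f n z) = indicator ({0..} \<times> UNIV) z * hfun X b \<omega> z" for z
  proof (rule antisym)
    show "(SUP n. f n z) \<le> indicator ({0..} \<times> UNIV) z * hfun X b \<omega> z"
      by (rule SUP_least) (auto simp: f_def indicator_def)
    show "indicator ({0..} \<times> UNIV) z * hfun X b \<omega> z \<le> (SUP n. f n z)"
    proof (cases "0 \<le> fst z")
      case True
      obtain n :: nat where "fst z \<le> real n" using real_arch_simple by blast
      then have "f n z = indicator ({0..} \<times> UNIV) z * hfun X b \<omega> z"
        using True by (auto simp: f_def indicator_def mem_Times_iff)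
      then show ?thesis by (intro SUP_upper2[of n]) auto
    next
      case False then show ?thesis by (auto simp: indicator_def mem_Times_iff)
    qed
  qed
  have "int_nu \<nu> (\<lambda>\<omega> t x. indicator (Gamma0 X b) (\<omega>, t, x)) {0..} \<omega> =
    (\<integral>\<^sup>+ z. (SUP n. f n z) \<partial>\<nu> \<omega>)"
    by (subst int_nu_hfun) (auto simp: sup)
  also have "\<dots> = (SUP n. integral\<^sup>N (\<nu> \<omega>) (f n))"
    by (rule nn_integral_monotone_convergence_SUP[OF inc fm])
  also have "\<dots> = 0"
  proof -
    have "integral\<^sup>N (\<nu> \<omega>) (f n) = 0" for n
    proof -
      have "integral\<^sup>N (\<nu> \<omega>) (f n) = int_nu \<nu> (\<lambda>\<omega> t x. indicator (Gamma0 X b) (\<omega>, t, x)) {0..real n} \<omega>"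
        by (subst int_nu_hfun) (auto simp: f_def[abs_def])
      then show ?thesis using z[rule_format, of "real n"] by simp
    qed
    then show ?thesis by simp
  qed
  finally show ?thesis .
qed

lemma part1:
  fixes M :: "'a measure" and F :: "real \<Rightarrow> 'a measure"
    and X :: "real \<Rightarrow> 'a \<Rightarrow> real" and b :: "real \<Rightarrow> real"
    and \<nu> :: "'a \<Rightarrow> (real \<times> real) measure"
  assumes uc: "usual_conditions M F"
    and sm: "semimartingale M F X"
    and cb: "continuous_on {0..} b"
    and X0: "\<forall>\<omega>\<in>space M. X 0 \<omega> < b 0"
    and comp: "is_compensator M F X \<nu>"
    and H: "AE \<omega> in M. int_nu \<nu> (\<lambda>\<omega> t x. indicator (Gamma0 X b) (\<omega>, t, x)) {0..} \<omega> = 0"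
  shows "J0 M X b \<in> null_sets M"
proof -
  let ?W = "\<lambda>\<omega> t x. indicator (Gamma0 X b) (\<omega>, t, x) :: ennreal"
  have filt: "filt_ok M F" by (rule uc_filt[OF uc])
  have ad: "adapted F X" and cad: "cadlag M X" using sm unfolding semimartingale_def by auto
  have W: "Ptilde_measurable M F ?W" by (rule W0_ptilde[OF filt ad cad cb])
  have eq: "(\<integral>\<^sup>+ \<omega>. int_mu X ?W {0..} \<omega> \<partial>M) = (\<integral>\<^sup>+ \<omega>. int_nu \<nu> ?W {0..} \<omega> \<partial>M)"
    using comp W unfolding is_compensator_def by blast
  have z: "(\<integral>\<^sup>+ \<omega>. int_nu \<nu> ?W {0..} \<omega> \<partial>M) = 0"
    using nn_integral_cong_AE[OF H] by simp
  define E where "E = {\<omega> \<in> space M. Echar X b \<omega>}"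
  have Em: "E \<in> sets M" unfolding E_def by (rule E_meas[OF filt ad])
  have "emeasure M E = (\<integral>\<^sup>+ \<omega>. indicator E \<omega> \<partial>M)" using Em by (simp add: nn_integral_indicator)
  also have "\<dots> \<le> (\<integral>\<^sup>+ \<omega>. int_mu X ?W {0..} \<omega> \<partial>M)"
  proof (rule nn_integral_mono)
    fix \<omega> assume om: "\<omega> \<in> space M"
    show "indicator E \<omega> \<le> int_mu X ?W {0..} \<omega>"
    proof (cases "\<omega> \<in> E")
      case True
      then obtain s where "0 < s" "Xminus X s \<omega> < b s" "X s \<omega> = b s"
        using E_bwd[OF cad cb om] unfolding E_def by blast
      then show ?thesis using True int_mu_ge1 by auto
    next
      case False then show ?thesis by simp
    qed
  qed
  finally have "emeasure M E = 0" using eq z by simp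
  then have En: "E \<in> null_sets M" using Em by (simp add: null_setsI)
  have sub: "J0 M X b \<subseteq> E"
  proof
    fix \<omega> assume J: "\<omega> \<in> J0 M X b"
    then have om: "\<omega> \<in> space M" by (simp add: J0_def)
    obtain s where "0 < s" "Xminus X s \<omega> < b s" "X s \<omega> = b s"
      using J0_jump[OF cad cb X0 J] by blast
    then show "\<omega> \<in> E" using E_fwd[OF cad cb om] om unfolding E_def by blast
  qed
  have "J0 M X b \<in> sets M" using uc En sub unfolding usual_conditions_def by blast
  then show ?thesis using null_sets_subset[OF En _ sub] by blast
qed

definition dyI :: "nat \<Rightarrow> real \<Rightarrow> real set" where
  "dyI n x = {real_of_int \<lfloor>2 ^ n * x\<rfloor> / 2 ^ n ..< (real_of_int \<lfloor>2 ^ n * x\<rfloor> + 1) / 2 ^ n}"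

definition dyJ :: "nat \<Rightarrow> int \<Rightarrow> real set" where
  "dyJ n j = {real_of_int j / 2 ^ n ..< (real_of_int j + 1) / 2 ^ n}"

lemma dyI_J: "dyI n x = dyJ n \<lfloor>2 ^ n * x\<rfloor>"
  by (simp add: dyI_def dyJ_def)

lemma dyJ_borel[measurable]: "dyJ n j \<in> sets borel"
  by (simp add: dyJ_def)

lemma dyI_borel: "dyI n x \<in> sets borel"
  by (simp add: dyI_J)

lemma dyI_mem: "x \<in> dyI n x"
proof -
  have p: "(0::real) < 2 ^ n" by simp
  have "real_of_int \<lfloor>2 ^ n * x\<rfloor> \<le> 2 ^ n * x" by linarith
  moreover have "2 ^ n * x < real_of_int \<lfloor>2 ^ n * x\<rfloor> + 1" by linarith
  ultimately show ?thesis using p unfolding dyI_def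
    by (auto simp: divide_le_eq pos_less_divide_eq mult.commute)
qed

lemma dyI_close: "y \<in> dyI n x \<Longrightarrow> \<bar>y - x\<bar> < 1 / 2 ^ n"
proof -
  assume y: "y \<in> dyI n x"
  have p: "(0::real) < 2 ^ n" by simp
  define a where "a = real_of_int \<lfloor>2 ^ n * x\<rfloor>"
  have a1: "a \<le> 2 ^ n * x" "2 ^ n * x < a + 1" unfolding a_def by linarith+
  have y1: "a \<le> 2 ^ n * y" "2 ^ n * y < a + 1" using y p unfolding dyI_def a_def[symmetric]
    by (auto simp: divide_le_eq pos_less_divide_eq mult.commute)
  have "\<bar>2 ^ n * y - 2 ^ n * x\<bar> < 1" using a1 y1 by linarith
  then have "2 ^ n * \<bar>y - x\<bar> < 1" by (simp add: abs_mult right_diff_distrib[symmetric])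
  then show ?thesis using p by (simp add: pos_less_divide_eq mult.commute)
qed

lemma dyI_mono: "dyI (Suc n) x \<subseteq> dyI n x"
proof
  fix y assume y: "y \<in> dyI (Suc n) x"
  have p: "(0::real) < 2 ^ n" by simp
  define a where "a = \<lfloor>2 ^ n * x\<rfloor>"
  define c where "c = \<lfloor>2 ^ Suc n * x\<rfloor>"
  have a1: "real_of_int a \<le> 2 ^ n * x" "2 ^ n * x < real_of_int a + 1" unfolding a_def by linarith+
  have c1: "real_of_int c \<le> 2 * (2 ^ n * x)" "2 * (2 ^ n * x) < real_of_int c + 1" unfolding c_def by simp_all linarith+
  have "2 * a \<le> c" using a1 c1 by linarith
  then have h1: "real_of_int (2 * a) \<le> real_of_int c" by (simp only: of_int_le_iff)
  have "c \<le> 2 * a + 1" using a1 c1 by linarith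
  then have h2: "real_of_int c \<le> real_of_int (2 * a + 1)" by (simp only: of_int_le_iff)
  have ca: "2 * real_of_int a \<le> real_of_int c" "real_of_int c + 1 \<le> 2 * (real_of_int a + 1)"
    using h1 h2 by simp_all
  have y1: "real_of_int c \<le> 2 * (2 ^ n * y)" "2 * (2 ^ n * y) < real_of_int c + 1"
    using y p unfolding dyI_def c_def[symmetric]
    by (auto simp: divide_le_eq pos_less_divide_eq mult.commute mult.left_commute)
  have "real_of_int a \<le> 2 ^ n * y" using ca y1 by linarith
  moreover have "2 ^ n * y < real_of_int a + 1"
  proof -
    have "2 * (2 ^ n * y) < 2 * (real_of_int a + 1)" using ca(2) y1(2) by linarith
    then show ?thesis by simp
  qed
  ultimately
  show "y \<in> dyI n x" using p unfolding dyI_def a_def[symmetric]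
    by (auto simp: divide_le_eq pos_less_divide_eq mult.commute)
qed

lemma dyI_decseq: "decseq (\<lambda>n. dyI n x)"
  by (rule decseq_SucI) (rule dyI_mono)

lemma dyI_Inter: "(\<Inter>n. dyI n x) = {x}"
proof
  show "{x} \<subseteq> (\<Inter>n. dyI n x)" using dyI_mem by auto
  show "(\<Inter>n. dyI n x) \<subseteq> {x}"
  proof
    fix y assume y: "y \<in> (\<Inter>n. dyI n x)"
    have "\<bar>y - x\<bar> < 1 / 2 ^ n" for n using y dyI_close by blast
    then have "\<bar>y - x\<bar> \<le> 0"
    proof -
      have lim: "(\<lambda>n. (1/2::real) ^ n) \<longlonglongrightarrow> 0" by (rule LIMSEQ_realpow_zero) auto
      have "\<bar>y - x\<bar> \<le> (1/2) ^ n" for n using \<open>\<And>n. \<bar>y - x\<bar> < 1 / 2 ^ n\<close>[of n]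
        by (simp add: power_one_over)
      then show ?thesis using LIMSEQ_le_const[OF lim] by (metis (no_types, lifting))
    qed
    then show "y \<in> {x}" by simp
  qed
qed

lemma K_atom_INF:
  assumes "sets N = sets (borel :: real measure)" "\<exists>n. emeasure N (dyI n x) \<noteq> \<infinity>"
  shows "(INF n. emeasure N (dyI n x)) = emeasure N {x}"
proof -
  have "(INF n. emeasure N (dyI n x)) = emeasure N (\<Inter>n. dyI n x)"
    by (rule INF_emeasure_decseq') (use assms dyI_borel dyI_decseq in auto)
  then show ?thesis by (simp add: dyI_Inter)
qed

lemma ptilde_sec:
  fixes W :: "'a \<Rightarrow> real \<Rightarrow> real \<Rightarrow> ennreal"
  assumes filt: "filt_ok M F" and W: "Ptilde_measurable M F W" and om: "\<omega> \<in> space M"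
  shows "(\<lambda>z. indicator ({0..} \<times> UNIV) z * W \<omega> (fst z) (snd z)) \<in> borel_measurable (borel :: (real \<times> real) measure)"
proof -
  have m1: "(\<lambda>t. (\<omega>, max t 0)) \<in> (borel :: real measure) \<rightarrow>\<^sub>M pred_sigma M F"
    using measurable_comp[OF max0_meas sec_time[OF filt om]] by (simp add: o_def)
  have m2: "(\<lambda>z. ((\<omega>, max (fst z) 0), snd z)) \<in> ((borel :: real measure) \<Otimes>\<^sub>M (borel :: real measure)) \<rightarrow>\<^sub>M
      (pred_sigma M F \<Otimes>\<^sub>M (borel :: real measure))"
  proof (rule measurable_Pair)
    show "(\<lambda>z. (\<omega>, max (fst z) 0)) \<in> ((borel :: real measure) \<Otimes>\<^sub>M (borel :: real measure)) \<rightarrow>\<^sub>M pred_sigma M F"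
      using measurable_comp[OF measurable_fst m1] by (simp add: o_def)
  qed simp
  have W': "(\<lambda>((\<omega>, t), x). W \<omega> t x) \<in> borel_measurable (pred_sigma M F \<Otimes>\<^sub>M (borel :: real measure))"
    using W unfolding Ptilde_measurable_def .
  have m3: "(\<lambda>z. W \<omega> (max (fst z) 0) (snd z)) \<in> borel_measurable ((borel :: real measure) \<Otimes>\<^sub>M (borel :: real measure))"
    using measurable_comp[OF m2 W'] by (simp add: o_def)
  have [measurable]: "({0..} \<times> UNIV) \<in> sets ((borel :: real measure) \<Otimes>\<^sub>M (borel :: real measure))"
    by (simp add: borel_prod)
  have m4: "(\<lambda>z. indicator ({0..} \<times> UNIV) z * W \<omega> (max (fst z) 0) (snd z))
      \<in> borel_measurable ((borel :: real measure) \<Otimes>\<^sub>M (borel :: real measure))"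
    using m3 by measurable
  have e: "(\<lambda>z. indicator ({0..} \<times> UNIV) z * W \<omega> (max (fst z) 0) (snd z)) =
     (\<lambda>z. indicator ({0..} \<times> UNIV) z * W \<omega> (fst z) (snd z))"
    by (auto simp: fun_eq_iff indicator_def mem_Times_iff)
  show ?thesis using m4 unfolding e by (simp add: borel_prod)
qed

lemma int_nu_SUP:
  fixes W :: "'a \<Rightarrow> real \<Rightarrow> real \<Rightarrow> ennreal"
  assumes sets: "sets (\<nu> \<omega>) = sets borel"
    and hm: "(\<lambda>z. indicator ({0..} \<times> UNIV) z * W \<omega> (fst z) (snd z)) \<in> borel_measurable (borel :: (real \<times> real) measure)"
  shows "int_nu \<nu> W {0..} \<omega> = (SUP n. int_nu \<nu> W {0..real n} \<omega>)"
proof -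
  let ?h = "\<lambda>z. indicator ({0..} \<times> UNIV) z * W \<omega> (fst z) (snd z)"
  have [measurable]: "({..real n} \<times> UNIV) \<in> sets (borel :: (real \<times> real) measure)" for n
    by (intro borel_closed closed_Times) auto
  have hm'[measurable]: "?h \<in> borel_measurable borel" by (rule hm)
  define f where "f n z = indicator ({..real n} \<times> UNIV) z * ?h z" for n :: nat and z
  have fm: "f n \<in> borel_measurable (\<nu> \<omega>)" for n
    unfolding f_def measurable_cong_sets[OF sets refl] by measurable
  have inc: "incseq f"
    by (auto simp: incseq_def le_fun_def f_def indicator_def intro!: mult_right_mono)
  have sup: "(SUP n. f n z) = ?h z" for z
  proof (rule antisym)
    show "(SUP n. f n z) \<le> ?h z"
      by (rule SUP_least) (auto simp: f_def indicator_def)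
    obtain n :: nat where "fst z \<le> real n" using real_arch_simple by blast
    then have "f n z = ?h z" by (auto simp: f_def indicator_def mem_Times_iff)
    then show "?h z \<le> (SUP n. f n z)" by (intro SUP_upper2[of n]) auto
  qed
  have fi: "integral\<^sup>N (\<nu> \<omega>) (f n) = int_nu \<nu> W {0..real n} \<omega>" for n
    unfolding int_nu_def f_def
    by (rule nn_integral_cong) (auto simp: indicator_def mem_Times_iff)
  have "int_nu \<nu> W {0..} \<omega> = (\<integral>\<^sup>+ z. (SUP n. f n z) \<partial>\<nu> \<omega>)"
    unfolding sup int_nu_def by simp
  also have "\<dots> = (SUP n. integral\<^sup>N (\<nu> \<omega>) (f n))"
    by (rule nn_integral_monotone_convergence_SUP[OF inc fm])
  finally show ?thesis unfolding fi .
qed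

lemma int_nu_meas:
  fixes W :: "'a \<Rightarrow> real \<Rightarrow> real \<Rightarrow> ennreal"
  assumes filt: "filt_ok M F" and comp: "is_compensator M F X \<nu>" and W: "Ptilde_measurable M F W"
  shows "(\<lambda>\<omega>. int_nu \<nu> W {0..} \<omega>) \<in> borel_measurable M"
proof -
  have pp: "(\<lambda>(\<omega>, t). int_nu \<nu> W {0..t} \<omega>) \<in> borel_measurable (pred_sigma M F)"
    using comp W unfolding is_compensator_def predictable_process_def by blast
  have mn: "(\<lambda>\<omega>. int_nu \<nu> W {0..real n} \<omega>) \<in> borel_measurable M" for n
    using pred_sec_omega[OF filt pp, of "real n"] by simp
  have "(\<lambda>\<omega>. SUP n. int_nu \<nu> W {0..real n} \<omega>) \<in> borel_measurable M"
    using mn by measurable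
  moreover have eq: "int_nu \<nu> W {0..} \<omega> = (SUP n. int_nu \<nu> W {0..real n} \<omega>)" if om: "\<omega> \<in> space M" for \<omega>
  proof (rule int_nu_SUP)
    show "sets (\<nu> \<omega>) = sets borel" using comp om unfolding is_compensator_def by blast
    show "(\<lambda>z. indicator ({0..} \<times> UNIV) z * W \<omega> (fst z) (snd z)) \<in> borel_measurable borel"
      by (rule ptilde_sec[OF filt W om])
  qed
  ultimately show ?thesis using measurable_cong[of M "\<lambda>\<omega>. int_nu \<nu> W {0..} \<omega>" "\<lambda>\<omega>. SUP n. int_nu \<nu> W {0..real n} \<omega>" borel] eq
    by blast
qed

lemma sec_borel:
  assumes filt: "filt_ok M F" and S: "S \<in> sets (pred_sigma M F)" and om: "\<omega> \<in> space M"
  shows "{t. (\<omega>, t) \<in> S} \<in> sets borel"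
proof -
  have "Pair \<omega> -` S \<inter> space (restrict_space borel {0..}) \<in> sets (restrict_space borel {0..})"
    using measurable_sets[OF sec_time[OF filt om] S] .
  moreover have "Pair \<omega> -` S \<inter> space (restrict_space borel {0..}) = {t. (\<omega>, t) \<in> S}"
    using sets.sets_into_space[OF S] by (auto simp: space_pred space_restrict_space)
  ultimately show ?thesis by (auto simp: sets_restrict_space_iff)
qed

locale P2ctx =
  fixes M :: "'a measure" and F :: "real \<Rightarrow> 'a measure"
    and X :: "real \<Rightarrow> 'a \<Rightarrow> real" and b :: "real \<Rightarrow> real"
    and \<nu> :: "'a \<Rightarrow> (real \<times> real) measure"
    and A :: "real \<Rightarrow> 'a \<Rightarrow> real" and K :: "'a \<Rightarrow> real \<Rightarrow> real measure"
  assumes uc: "usual_conditions M F"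
    and sm: "semimartingale M F X"
    and cb: "continuous_on {0..} b"
    and comp: "is_compensator M F X \<nu>"
    and pd: "predictable_disintegration M F \<nu> A K"
    and ps: "prob_space M"
begin

lemma split_fun: "(\<lambda>(\<omega>, t). f \<omega> t) = (\<lambda>x. f (fst x) (snd x))"
  by (auto simp: fun_eq_iff)

lemma filt: "filt_ok M F" by (rule uc_filt[OF uc])
lemma ad: "adapted F X" using sm unfolding semimartingale_def by auto
lemma cad: "cadlag M X" using sm unfolding semimartingale_def by auto

definition pt :: "'a \<Rightarrow> real \<Rightarrow> real" where "pt \<omega> t = b t - Xminus X t \<omega>"

lemma pt_meas[measurable]: "(\<lambda>x. pt (fst x) (snd x)) \<in> borel_measurable (pred_sigma M F)"
proof -
  have "(\<lambda>x. b (snd x)) \<in> borel_measurable (pred_sigma M F)"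
    using b_pred[OF filt cb] unfolding split_fun .
  moreover have "(\<lambda>x. Xminus X (snd x) (fst x)) \<in> borel_measurable (pred_sigma M F)"
    using Xminus_pred[OF filt ad cad] unfolding split_fun .
  ultimately show ?thesis unfolding pt_def by measurable
qed

lemma Xm_meas[measurable]: "(\<lambda>x. Xminus X (snd x) (fst x)) \<in> borel_measurable (pred_sigma M F)"
  using Xminus_pred[OF filt ad cad] unfolding split_fun .

lemma b_meas[measurable]: "(\<lambda>x. b (snd x)) \<in> borel_measurable (pred_sigma M F)"
  using b_pred[OF filt cb] unfolding split_fun .

lemma K_meas: "B \<in> sets borel \<Longrightarrow> (\<lambda>x. emeasure (K (fst x) (snd x)) B) \<in> borel_measurable (pred_sigma M F)"
  using pd unfolding predictable_disintegration_def split_fun by blast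

definition q :: "nat \<Rightarrow> 'a \<Rightarrow> real \<Rightarrow> ennreal" where
  "q n \<omega> t = emeasure (K \<omega> t) (dyI n (pt \<omega> t))"

lemma q_meas[measurable]: "(\<lambda>x. q n (fst x) (snd x)) \<in> borel_measurable (pred_sigma M F)"
proof -
  have g: "(\<lambda>x. \<lfloor>2 ^ n * pt (fst x) (snd x)\<rfloor>) \<in> measurable (pred_sigma M F) (count_space UNIV)"
    by measurable
  have "(\<lambda>x. (\<lambda>j x. emeasure (K (fst x) (snd x)) (dyJ n j)) (\<lfloor>2 ^ n * pt (fst x) (snd x)\<rfloor>) x)
      \<in> borel_measurable (pred_sigma M F)"
    by (rule measurable_compose_countable[OF _ g]) (rule K_meas[OF dyJ_borel])
  then show ?thesis by (simp add: q_def dyI_J)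
qed

definition Dset where "Dset = {x \<in> space M \<times> {0..}. Xminus X (snd x) (fst x) < b (snd x)}"
definition S1 where "S1 = {x \<in> Dset. (\<exists>n. q n (fst x) (snd x) < \<infinity>) \<and> 0 < (INF n. q n (fst x) (snd x))}"
definition Rset where "Rset = {x \<in> Dset. \<forall>n. q n (fst x) (snd x) = \<infinity>}"

lemma Dset_sets: "Dset \<in> sets (pred_sigma M F)"
proof -
  have "{x \<in> space (pred_sigma M F). Xminus X (snd x) (fst x) < b (snd x)} \<in> sets (pred_sigma M F)"
    by measurable
  then show ?thesis by (simp add: Dset_def space_pred)
qed

lemma S1_sets: "S1 \<in> sets (pred_sigma M F)"
proof -
  have "{x \<in> space (pred_sigma M F). Xminus X (snd x) (fst x) < b (snd x) \<and>
     (\<exists>n. q n (fst x) (snd x) < \<infinity>) \<and> 0 < (INF n. q n (fst x) (snd x))} \<in> sets (pred_sigma M F)"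
    by measurable
  then show ?thesis by (simp add: S1_def Dset_def space_pred conj_assoc)
qed

lemma Rset_sets: "Rset \<in> sets (pred_sigma M F)"
proof -
  have "{x \<in> space (pred_sigma M F). Xminus X (snd x) (fst x) < b (snd x) \<and>
     (\<forall>n. q n (fst x) (snd x) = \<infinity>)} \<in> sets (pred_sigma M F)"
    by measurable
  then show ?thesis by (simp add: Rset_def Dset_def space_pred conj_assoc)
qed

end

context P2ctx begin

lemma nu_sets: "\<omega> \<in> space M \<Longrightarrow> sets (\<nu> \<omega>) = sets borel"
  using comp unfolding is_compensator_def by blast

lemma disint: "\<omega> \<in> space M \<Longrightarrow> C \<in> sets borel \<Longrightarrow>
   emeasure (\<nu> \<omega>) C = (\<integral>\<^sup>+ t. indicator {0..} t * emeasure (K \<omega> t) (Pair t -` C) \<partial>dA A \<omega>)"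
  using pd unfolding predictable_disintegration_def by blast

lemma fiber_formula:
  fixes S :: "('a \<times> real) set" and B :: "'a \<Rightarrow> real \<Rightarrow> real set"
  assumes om: "\<omega> \<in> space M" and S: "S \<subseteq> space M \<times> {0..}"
    and W: "Ptilde_measurable M F (\<lambda>\<omega> t x. indicator {(\<omega>, t, x). (\<omega>, t) \<in> S \<and> x \<in> B \<omega> t} (\<omega>, t, x))"
  shows "int_nu \<nu> (\<lambda>\<omega> t x. indicator {(\<omega>, t, x). (\<omega>, t) \<in> S \<and> x \<in> B \<omega> t} (\<omega>, t, x)) {0..} \<omega> =
    (\<integral>\<^sup>+ t. indicator {t. (\<omega>, t) \<in> S} t * emeasure (K \<omega> t) (B \<omega> t) \<partial>dA A \<omega>)"
proof -
  let ?W = "\<lambda>\<omega> t x. indicator {(\<omega>, t, x). (\<omega>, t) \<in> S \<and> x \<in> B \<omega> t} (\<omega>, t, x) :: ennreal"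
  define C where "C = {z :: real \<times> real. 0 \<le> fst z \<and> (\<omega>, fst z) \<in> S \<and> snd z \<in> B \<omega> (fst z)}"
  have e1: "(\<lambda>z. indicator ({0..} \<times> UNIV) z * ?W \<omega> (fst z) (snd z)) = indicator C"
    by (auto simp: fun_eq_iff indicator_def C_def mem_Times_iff)
  have "(indicator C :: real \<times> real \<Rightarrow> ennreal) \<in> borel_measurable (borel :: (real \<times> real) measure)"
    using ptilde_sec[OF filt W om] unfolding e1 .
  then have Cb: "C \<in> sets borel" by (simp add: borel_measurable_indicator_iff)
  have "int_nu \<nu> ?W {0..} \<omega> = (\<integral>\<^sup>+ z. indicator C z \<partial>\<nu> \<omega>)"
    unfolding int_nu_def by (rule nn_integral_cong) (use fun_cong[OF e1] in simp)
  also have "\<dots> = emeasure (\<nu> \<omega>) C"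
    using Cb nu_sets[OF om] by (simp add: nn_integral_indicator)
  also have "\<dots> = (\<integral>\<^sup>+ t. indicator {0..} t * emeasure (K \<omega> t) (Pair t -` C) \<partial>dA A \<omega>)"
    by (rule disint[OF om Cb])
  also have "\<dots> = (\<integral>\<^sup>+ t. indicator {t. (\<omega>, t) \<in> S} t * emeasure (K \<omega> t) (B \<omega> t) \<partial>dA A \<omega>)"
  proof (rule nn_integral_cong)
    fix t
    show "indicator {0..} t * emeasure (K \<omega> t) (Pair t -` C) =
          indicator {t. (\<omega>, t) \<in> S} t * emeasure (K \<omega> t) (B \<omega> t)"
    proof (cases "(\<omega>, t) \<in> S")
      case True
      then have "0 \<le> t" using S by auto
      moreover have "Pair t -` C = B \<omega> t" using True \<open>0 \<le> t\<close> by (auto simp: C_def)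
      ultimately show ?thesis using True by simp
    next
      case False
      then have "Pair t -` C = {}" by (auto simp: C_def)
      then show ?thesis using False by simp
    qed
  qed
  finally show ?thesis .
qed

lemma W_graph_ptilde:
  assumes S: "S \<in> sets (pred_sigma M F)"
  shows "Ptilde_measurable M F (\<lambda>\<omega> t x. indicator {(\<omega>, t, x). (\<omega>, t) \<in> S \<and> x \<in> {pt \<omega> t}} (\<omega>, t, x))"
proof -
  let ?N = "pred_sigma M F \<Otimes>\<^sub>M (borel :: real measure)"
  have [measurable]: "(\<lambda>z. pt (fst (fst z)) (snd (fst z))) \<in> borel_measurable ?N"
    using measurable_comp[OF measurable_fst pt_meas] by (simp add: o_def)
  have [measurable]: "Measurable.pred ?N (\<lambda>z. fst z \<in> S)"
    by (rule pred_sets2[OF S measurable_fst])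
  have e: "(\<lambda>((\<omega>, t), x). indicator {(\<omega>, t, x). (\<omega>, t) \<in> S \<and> x \<in> {pt \<omega> t}} (\<omega>, t, x)) =
    (\<lambda>z. if fst z \<in> S \<and> snd z = pt (fst (fst z)) (snd (fst z)) then 1 else (0::ennreal))"
    by (auto simp: fun_eq_iff indicator_def)
  show ?thesis unfolding Ptilde_measurable_def e by measurable
qed

lemma dyI_floor: "y \<in> dyI n x \<longleftrightarrow> \<lfloor>2 ^ n * y\<rfloor> = \<lfloor>2 ^ n * x\<rfloor>"
proof -
  have p: "(0::real) < 2 ^ n" by simp
  have "y \<in> dyI n x \<longleftrightarrow> real_of_int \<lfloor>2 ^ n * x\<rfloor> \<le> 2 ^ n * y \<and> 2 ^ n * y < real_of_int \<lfloor>2 ^ n * x\<rfloor> + 1"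
    using p unfolding dyI_def by (auto simp: divide_le_eq pos_less_divide_eq mult.commute)
  also have "\<dots> \<longleftrightarrow> \<lfloor>2 ^ n * y\<rfloor> = \<lfloor>2 ^ n * x\<rfloor>" by (simp add: floor_eq_iff)
  finally show ?thesis .
qed

lemma W_dy_ptilde:
  assumes S: "S \<in> sets (pred_sigma M F)"
  shows "Ptilde_measurable M F (\<lambda>\<omega> t x. indicator {(\<omega>, t, x). (\<omega>, t) \<in> S \<and> x \<in> dyI n (pt \<omega> t)} (\<omega>, t, x))"
proof -
  let ?N = "pred_sigma M F \<Otimes>\<^sub>M (borel :: real measure)"
  have [measurable]: "(\<lambda>z. pt (fst (fst z)) (snd (fst z))) \<in> borel_measurable ?N"
    using measurable_comp[OF measurable_fst pt_meas] by (simp add: o_def)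
  have [measurable]: "Measurable.pred ?N (\<lambda>z. fst z \<in> S)"
    by (rule pred_sets2[OF S measurable_fst])
  have e: "(\<lambda>((\<omega>, t), x). indicator {(\<omega>, t, x). (\<omega>, t) \<in> S \<and> x \<in> dyI n (pt \<omega> t)} (\<omega>, t, x)) =
    (\<lambda>z. if fst z \<in> S \<and> \<lfloor>2 ^ n * snd z\<rfloor> = \<lfloor>2 ^ n * pt (fst (fst z)) (snd (fst z))\<rfloor> then 1 else (0::ennreal))"
    by (auto simp: fun_eq_iff indicator_def dyI_floor)
  show ?thesis unfolding Ptilde_measurable_def e by measurable
qed

end

context P2ctx begin

definition Nset :: "'a \<Rightarrow> real set" where
  "Nset \<omega> = {t. 0 \<le> t \<and> \<not> (\<forall>x. emeasure (K \<omega> t) {x} = 0)}"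

definition hN :: "'a \<Rightarrow> ennreal" where
  "hN \<omega> = (\<integral>\<^sup>+ t. indicator (Nset \<omega>) t \<partial>dA A \<omega>)"

lemma hN_zero: "(\<integral>\<^sup>+ \<omega>. hN \<omega> \<partial>M) = 0"
  using pd unfolding predictable_disintegration_def hN_def Nset_def by blast

lemma K_sets: "\<omega> \<in> space M \<Longrightarrow> 0 \<le> t \<Longrightarrow> sets (K \<omega> t) = sets borel"
  using pd unfolding predictable_disintegration_def by blast

lemma S1_sub: "S1 \<subseteq> space M \<times> {0..}" by (auto simp: S1_def Dset_def)
lemma Rset_sub: "Rset \<subseteq> space M \<times> {0..}" by (auto simp: Rset_def Dset_def)

lemma S1_atom:
  assumes "(\<omega>, t) \<in> S1"
  shows "emeasure (K \<omega> t) {pt \<omega> t} = (INF n. q n \<omega> t)"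
proof -
  have om: "\<omega> \<in> space M" "0 \<le> t" using assms S1_sub by auto
  have "\<exists>n. emeasure (K \<omega> t) (dyI n (pt \<omega> t)) \<noteq> \<infinity>" using assms by (auto simp: S1_def q_def less_top)
  then show ?thesis unfolding q_def by (rule K_atom_INF[OF K_sets[OF om], symmetric])
qed

definition Sj :: "nat \<Rightarrow> ('a \<times> real) set" where
  "Sj j = {x \<in> S1. ennreal (1 / real (Suc j)) \<le> (INF n. q n (fst x) (snd x)) \<and>
                   (INF n. q n (fst x) (snd x)) \<le> ennreal (real (Suc j))}"

lemma Sj_sets: "Sj j \<in> sets (pred_sigma M F)"
proof -
  have "{x \<in> space (pred_sigma M F). x \<in> S1 \<and> ennreal (1 / real (Suc j)) \<le> (INF n. q n (fst x) (snd x)) \<and>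
                   (INF n. q n (fst x) (snd x)) \<le> ennreal (real (Suc j))} \<in> sets (pred_sigma M F)"
    using S1_sets by measurable
  then show ?thesis using S1_sets[THEN sets.sets_into_space] by (auto simp: Sj_def elim!: rev_iffD1[OF _ arg_cong[where f="\<lambda>S. S \<in> _"]])
qed

lemma dA_sets[simp]: "sets (dA A \<omega>) = sets borel"
  by (simp add: dA_def)

lemma Sj_sub: "Sj j \<subseteq> S1" by (auto simp: Sj_def)

lemma Sj_null: "AE \<omega> in M. emeasure (dA A \<omega>) {t. (\<omega>, t) \<in> Sj j} = 0"
proof -
  let ?W = "\<lambda>\<omega> t x. indicator {(\<omega>, t, x). (\<omega>, t) \<in> Sj j \<and> x \<in> {pt \<omega> t}} (\<omega>, t, x) :: ennreal"
  define \<psi> where "\<psi> \<omega> = int_nu \<nu> ?W {0..} \<omega>" for \<omega>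
  have \<psi>m: "\<psi> \<in> borel_measurable M"
    unfolding \<psi>_def by (rule int_nu_meas[OF filt comp W_graph_ptilde[OF Sj_sets]])
  define lo where "lo = ennreal (1 / real (Suc j))"
  define hi where "hi = ennreal (real (Suc j))"
  have lohi: "lo * hi = 1"
  proof -
    have "lo * hi = ennreal (1 / real (Suc j) * real (Suc j))"
      unfolding lo_def hi_def by (rule ennreal_mult[symmetric]) auto
    also have "\<dots> = 1" by simp
    finally show ?thesis .
  qed
  have lo0: "lo \<noteq> 0" by (simp add: lo_def)
  define Sw where "Sw \<omega> = {t. (\<omega>, t) \<in> Sj j}" for \<omega>
  have Swb: "Sw \<omega> \<in> sets (dA A \<omega>)" if om: "\<omega> \<in> space M" for \<omega>
    unfolding Sw_def using sec_borel[OF filt Sj_sets om] by simp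
  have \<psi>eq: "\<psi> \<omega> = (\<integral>\<^sup>+ t. indicator (Sw \<omega>) t * emeasure (K \<omega> t) {pt \<omega> t} \<partial>dA A \<omega>)"
    if om: "\<omega> \<in> space M" for \<omega>
    unfolding \<psi>_def Sw_def
    by (rule fiber_formula[OF om _ W_graph_ptilde[OF Sj_sets]]) (use Sj_sub S1_sub in blast)
  have atom: "emeasure (K \<omega> t) {pt \<omega> t} = (INF n. q n \<omega> t)" if "t \<in> Sw \<omega>" for \<omega> t
    using S1_atom Sj_sub that unfolding Sw_def by blast
  have bnd: "lo \<le> emeasure (K \<omega> t) {pt \<omega> t}" "emeasure (K \<omega> t) {pt \<omega> t} \<le> hi"
    if "t \<in> Sw \<omega>" for \<omega> t
    using atom[OF that] that unfolding Sw_def Sj_def lo_def hi_def by auto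
  have up: "\<psi> \<omega> \<le> hi * emeasure (dA A \<omega>) (Sw \<omega>)" if om: "\<omega> \<in> space M" for \<omega>
  proof -
    have "\<psi> \<omega> \<le> (\<integral>\<^sup>+ t. hi * indicator (Sw \<omega>) t \<partial>dA A \<omega>)"
      unfolding \<psi>eq[OF om]
      by (rule nn_integral_mono) (auto simp: indicator_def bnd)
    also have "\<dots> = hi * emeasure (dA A \<omega>) (Sw \<omega>)" by (rule nn_integral_cmult_indicator[OF Swb[OF om]])
    finally show ?thesis .
  qed
  have low: "lo * emeasure (dA A \<omega>) (Sw \<omega>) \<le> \<psi> \<omega>" if om: "\<omega> \<in> space M" for \<omega>
  proof -
    have "lo * emeasure (dA A \<omega>) (Sw \<omega>) = (\<integral>\<^sup>+ t. lo * indicator (Sw \<omega>) t \<partial>dA A \<omega>)"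
      by (rule nn_integral_cmult_indicator[OF Swb[OF om], symmetric])
    also have "\<dots> \<le> \<psi> \<omega>"
      unfolding \<psi>eq[OF om]
      by (rule nn_integral_mono) (auto simp: indicator_def bnd)
    finally show ?thesis .
  qed
  have dh: "emeasure (dA A \<omega>) (Sw \<omega>) \<le> hN \<omega>" if om: "\<omega> \<in> space M" for \<omega>
  proof -
    have "emeasure (dA A \<omega>) (Sw \<omega>) = (\<integral>\<^sup>+ t. indicator (Sw \<omega>) t \<partial>dA A \<omega>)"
      using Swb[OF om] by (simp add: nn_integral_indicator)
    also have "\<dots> \<le> hN \<omega>" unfolding hN_def
    proof (rule nn_integral_mono)
      fix t show "indicator (Sw \<omega>) t \<le> (indicator (Nset \<omega>) t :: ennreal)"
      proof (cases "t \<in> Sw \<omega>")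
        case True
        have "0 < lo" using lo0 by (simp add: zero_less_iff_neq_zero)
        then have "0 < emeasure (K \<omega> t) {pt \<omega> t}" using bnd(1)[OF True] by (rule less_le_trans)
        then have ne: "emeasure (K \<omega> t) {pt \<omega> t} \<noteq> 0" by simp
        have "0 \<le> t" using True Sj_sub S1_sub unfolding Sw_def by auto
        then have "t \<in> Nset \<omega>" using ne unfolding Nset_def by blast
        then show ?thesis using True by simp
      next
        case False then show ?thesis by simp
      qed
    qed
    finally show ?thesis .
  qed
  have le: "lo * \<psi> \<omega> \<le> hN \<omega>" if om: "\<omega> \<in> space M" for \<omega>
  proof -
    have "lo * \<psi> \<omega> \<le> lo * (hi * emeasure (dA A \<omega>) (Sw \<omega>))" by (rule mult_left_mono[OF up[OF om]]) simp
    also have "\<dots> = emeasure (dA A \<omega>) (Sw \<omega>)" by (simp add: mult.assoc[symmetric] lohi)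
    also have "\<dots> \<le> hN \<omega>" by (rule dh[OF om])
    finally show ?thesis .
  qed
  have "(\<integral>\<^sup>+ \<omega>. lo * \<psi> \<omega> \<partial>M) \<le> (\<integral>\<^sup>+ \<omega>. hN \<omega> \<partial>M)" by (rule nn_integral_mono) (rule le)
  then have "(\<integral>\<^sup>+ \<omega>. lo * \<psi> \<omega> \<partial>M) = 0" using hN_zero by simp
  then have "AE \<omega> in M. lo * \<psi> \<omega> = 0" using \<psi>m by (subst nn_integral_0_iff_AE[symmetric]) auto
  then show ?thesis using AE_space
  proof eventually_elim
    case (elim \<omega>)
    then have z: "lo * \<psi> \<omega> = 0" and om: "\<omega> \<in> space M" by auto
    then have "\<psi> \<omega> = 0" using lo0 by simp
    then have "lo * emeasure (dA A \<omega>) (Sw \<omega>) = 0" using low[OF om] by simp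
    then show "emeasure (dA A \<omega>) {t. (\<omega>, t) \<in> Sj j} = 0" using lo0 unfolding Sw_def by simp
  qed
qed

lemma ennreal_bracket:
  fixes v :: ennreal
  assumes "0 < v" "v < \<top>"
  shows "\<exists>j. ennreal (1 / real (Suc j)) \<le> v \<and> v \<le> ennreal (real (Suc j))"
proof -
  obtain r where r: "v = ennreal r" "0 \<le> r" using assms(2) by (cases v) auto
  have r0: "0 < r" using assms(1) r by simp
  obtain n1 :: nat where n1: "1 / r \<le> real n1" using real_arch_simple by blast
  obtain n2 :: nat where n2: "r \<le> real n2" using real_arch_simple by blast
  define j where "j = max n1 n2"
  have "1 / r \<le> real (Suc j)" using n1 by (simp add: j_def)
  then have "1 \<le> r * real (Suc j)" using r0 by (simp add: divide_le_eq mult.commute)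
  then have a: "1 / real (Suc j) \<le> r" by (simp add: divide_le_eq mult.commute)
  have b: "r \<le> real (Suc j)" using n2 by (simp add: j_def)
  have a': "ennreal (1 / real (Suc j)) \<le> ennreal r" using a by (rule ennreal_leI)
  have b': "ennreal r \<le> ennreal (real (Suc j))" using b by (rule ennreal_leI)
  show ?thesis unfolding r(1) using a' b' by blast
qed

lemma S1_null: "AE \<omega> in M. emeasure (dA A \<omega>) {t. (\<omega>, t) \<in> S1} = 0"
proof -
  have "AE \<omega> in M. \<forall>j. emeasure (dA A \<omega>) {t. (\<omega>, t) \<in> Sj j} = 0"
    using Sj_null by (simp add: AE_all_countable)
  then show ?thesis using AE_space
  proof eventually_elim
    case (elim \<omega>)
    then have z: "\<And>j. emeasure (dA A \<omega>) {t. (\<omega>, t) \<in> Sj j} = 0" and om: "\<omega> \<in> space M" by auto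
    have eq: "{t. (\<omega>, t) \<in> S1} = (\<Union>j. {t. (\<omega>, t) \<in> Sj j})"
    proof
      show "(\<Union>j. {t. (\<omega>, t) \<in> Sj j}) \<subseteq> {t. (\<omega>, t) \<in> S1}" using Sj_sub by auto
      show "{t. (\<omega>, t) \<in> S1} \<subseteq> (\<Union>j. {t. (\<omega>, t) \<in> Sj j})"
      proof
        fix t assume t: "t \<in> {t. (\<omega>, t) \<in> S1}"
        then obtain n where "q n \<omega> t < \<infinity>" and p: "0 < (INF n. q n \<omega> t)" by (auto simp: S1_def)
        moreover have "(INF n. q n \<omega> t) \<le> q n \<omega> t" by (rule INF_lower) simp
        ultimately have "(INF n. q n \<omega> t) < \<top>" by (simp add: le_less_trans)
        then obtain j where "ennreal (1 / real (Suc j)) \<le> (INF n. q n \<omega> t) \<and> (INF n. q n \<omega> t) \<le> ennreal (real (Suc j))"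
          using ennreal_bracket[OF p] by blast
        then show "t \<in> (\<Union>j. {t. (\<omega>, t) \<in> Sj j})" using t by (auto simp: Sj_def)
      qed
    qed
    show ?case unfolding eq
      by (rule emeasure_UN_eq_0[OF z]) (use sec_borel[OF filt Sj_sets om] in auto)
  qed
qed

end

definition osc_good :: "(real \<Rightarrow> real) \<Rightarrow> real \<Rightarrow> real \<Rightarrow> real set \<Rightarrow> bool" where
  "osc_good f e r P \<longleftrightarrow> finite P \<and> P \<subseteq> {0..r} \<and>
     (\<forall>u v. 0 \<le> u \<and> u < v \<and> v \<le> r \<and> (\<forall>p\<in>P. \<not> (u < p \<and> p \<le> v)) \<longrightarrow> \<bar>f v - f u\<bar> \<le> e)"

lemma osc_partition:
  fixes f :: "real \<Rightarrow> real"
  assumes T: "0 \<le> T" and e: "0 < e"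
    and rc: "\<And>s d. 0 \<le> s \<Longrightarrow> 0 < d \<Longrightarrow> \<exists>\<delta>>0. \<forall>w. s \<le> w \<and> w < s + \<delta> \<longrightarrow> \<bar>f w - f s\<bar> < d"
    and ll: "\<And>s. 0 < s \<Longrightarrow> \<exists>L. \<forall>d>0. \<exists>\<delta>>0. \<forall>w. s - \<delta> < w \<and> w < s \<longrightarrow> \<bar>f w - L\<bar> < d"
  shows "\<exists>P. osc_good f e T P"
proof -
  define S where "S = {r \<in> {0..T}. \<exists>P. osc_good f e r P}"
  have 0: "0 \<in> S" unfolding S_def osc_good_def using T by (intro CollectI conjI exI[of _ "{}"]) auto
  have bdd: "bdd_above S" unfolding S_def by (auto intro: bdd_aboveI[of _ T])
  define r where "r = Sup S"
  have r0: "0 \<le> r" unfolding r_def by (rule cSup_upper[OF 0 bdd])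
  have rT: "r \<le> T" unfolding r_def by (rule cSup_least) (use 0 in \<open>auto simp: S_def\<close>)
  have rS: "r \<in> S"
  proof (cases "r = 0")
    case True then show ?thesis using 0 by simp
  next
    case False
    then have rp: "0 < r" using r0 by simp
    obtain L where L: "\<forall>d>0. \<exists>\<delta>>0. \<forall>w. r - \<delta> < w \<and> w < r \<longrightarrow> \<bar>f w - L\<bar> < d" using ll[OF rp] by blast
    obtain \<delta> where \<delta>: "\<delta> > 0" "\<forall>w. r - \<delta> < w \<and> w < r \<longrightarrow> \<bar>f w - L\<bar> < e / 2"
      using L e by (metis half_gt_zero)
    obtain r' where r': "r' \<in> S" "r - \<delta> < r'"
      using less_cSup_iff[OF _ bdd, of "r - \<delta>"] 0 \<delta>(1) unfolding r_def by auto
    have r'r: "r' \<le> r" unfolding r_def by (rule cSup_upper[OF r'(1) bdd])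
    obtain P where P: "osc_good f e r' P" using r'(1) by (auto simp: S_def)
    have r'0: "0 \<le> r'" using r'(1) by (auto simp: S_def)
    have "osc_good f e r (P \<union> {r', r})"
      unfolding osc_good_def
    proof (intro conjI allI impI)
      show "finite (P \<union> {r', r})" using P by (simp add: osc_good_def)
      show "P \<union> {r', r} \<subseteq> {0..r}" using P r'r r'0 r0 by (auto simp: osc_good_def)
      fix u v assume uv: "0 \<le> u \<and> u < v \<and> v \<le> r \<and> (\<forall>p\<in>P \<union> {r', r}. \<not> (u < p \<and> p \<le> v))"
      show "\<bar>f v - f u\<bar> \<le> e"
      proof (cases "v \<le> r'")
        case True then show ?thesis using P uv unfolding osc_good_def by blast
      next
        case False
        then have "r' \<le> u" using uv by auto
        moreover have "v < r" using uv by (metis Un_iff insertI1 insert_commute le_less)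
        ultimately have "\<bar>f u - L\<bar> < e / 2" "\<bar>f v - L\<bar> < e / 2" using \<delta>(2) r'(2) uv by auto
        then show ?thesis by linarith
      qed
    qed
    then show ?thesis using r0 rT by (auto simp: S_def)
  qed
  have "r = T"
  proof (rule ccontr)
    assume "r \<noteq> T"
    then have rl: "r < T" using rT by simp
    obtain \<delta> where \<delta>: "\<delta> > 0" "\<forall>w. r \<le> w \<and> w < r + \<delta> \<longrightarrow> \<bar>f w - f r\<bar> < e / 2"
      using rc[OF r0, of "e / 2"] e by auto
    obtain P where P: "osc_good f e r P" using rS by (auto simp: S_def)
    define r'' where "r'' = min (r + \<delta> / 2) T"
    have r''r: "r < r''" using \<delta>(1) rl by (simp add: r''_def)
    have "osc_good f e r'' (P \<union> {r})"
      unfolding osc_good_def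
    proof (intro conjI allI impI)
      show "finite (P \<union> {r})" using P by (simp add: osc_good_def)
      show "P \<union> {r} \<subseteq> {0..r''}" using P r''r r0 by (auto simp: osc_good_def)
      fix u v assume uv: "0 \<le> u \<and> u < v \<and> v \<le> r'' \<and> (\<forall>p\<in>P \<union> {r}. \<not> (u < p \<and> p \<le> v))"
      show "\<bar>f v - f u\<bar> \<le> e"
      proof (cases "v \<le> r")
        case True then show ?thesis using P uv unfolding osc_good_def by blast
      next
        case False
        then have "r \<le> u" using uv by auto
        moreover have "v < r + \<delta>" using uv \<delta>(1) by (auto simp: r''_def)
        ultimately have "\<bar>f u - f r\<bar> < e / 2" "\<bar>f v - f r\<bar> < e / 2" using \<delta>(2) uv by auto
        then show ?thesis by linarith
      qed
    qed
    then have "r'' \<in> S" using r''r r0 by (auto simp: S_def r''_def)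
    then have "r'' \<le> r" unfolding r_def by (rule cSup_upper[OF _ bdd])
    then show False using r''r by simp
  qed
  then show ?thesis using rS by (auto simp: S_def)
qed


lemma grid_unique:
  fixes p :: real
  assumes "real k / 2 ^ n < p" "p \<le> (real k + 1) / 2 ^ n" "real k' / 2 ^ n < p" "p \<le> (real k' + 1) / 2 ^ n"
  shows "k = k'"
proof -
  have q: "(0::real) < 2 ^ n" by simp
  have a: "real k < 2 ^ n * p" "2 ^ n * p \<le> real k + 1" "real k' < 2 ^ n * p" "2 ^ n * p \<le> real k' + 1"
    using assms q by (auto simp: divide_less_eq le_divide_eq mult.commute)
  show ?thesis using a by linarith
qed

lemma osc_grid_bound:
  fixes f :: "real \<Rightarrow> real"
  assumes P: "osc_good f e T P"
  shows "finite {k::nat. (real k + 1) / 2 ^ n \<le> T \<and> e < \<bar>f ((real k + 1) / 2 ^ n) - f (real k / 2 ^ n)\<bar>}"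
    and "card {k::nat. (real k + 1) / 2 ^ n \<le> T \<and> e < \<bar>f ((real k + 1) / 2 ^ n) - f (real k / 2 ^ n)\<bar>} \<le> card P"
proof -
  define Sk where "Sk = {k::nat. (real k + 1) / 2 ^ n \<le> T \<and> e < \<bar>f ((real k + 1) / 2 ^ n) - f (real k / 2 ^ n)\<bar>}"
  have q: "(0::real) < 2 ^ n" by simp
  have "Sk \<subseteq> {..nat \<lceil>2 ^ n * T\<rceil>}"
  proof
    fix k assume "k \<in> Sk"
    then have "(real k + 1) / 2 ^ n \<le> T" by (simp add: Sk_def)
    then have "real k + 1 \<le> 2 ^ n * T" using q by (simp add: divide_le_eq mult.commute)
    then have "real_of_int (int k) \<le> real_of_int \<lceil>2 ^ n * T\<rceil>"
      using le_of_int_ceiling[of "2 ^ n * T"] by (simp only: of_int_of_nat_eq)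
    then have "int k \<le> \<lceil>2 ^ n * T\<rceil>" by (simp only: of_int_le_iff)
    then show "k \<in> {..nat \<lceil>2 ^ n * T\<rceil>}" by (simp add: le_nat_iff)
  qed
  then show fin: "finite {k::nat. (real k + 1) / 2 ^ n \<le> T \<and> e < \<bar>f ((real k + 1) / 2 ^ n) - f (real k / 2 ^ n)\<bar>}"
    unfolding Sk_def[symmetric] by (rule finite_subset) simp
  have ex: "\<exists>p\<in>P. real k / 2 ^ n < p \<and> p \<le> (real k + 1) / 2 ^ n" if k: "k \<in> Sk" for k
  proof (rule ccontr)
    assume "\<not> ?thesis"
    then have "\<forall>p\<in>P. \<not> (real k / 2 ^ n < p \<and> p \<le> (real k + 1) / 2 ^ n)" by blast
    moreover have "real k / 2 ^ n < (real k + 1) / 2 ^ n" using q by (simp add: divide_strict_right_mono)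
    ultimately have "\<bar>f ((real k + 1) / 2 ^ n) - f (real k / 2 ^ n)\<bar> \<le> e"
      using P k unfolding osc_good_def Sk_def by auto
    then show False using k by (simp add: Sk_def)
  qed
  define g where "g k = (SOME p. p \<in> P \<and> real k / 2 ^ n < p \<and> p \<le> (real k + 1) / 2 ^ n)" for k
  have g: "g k \<in> P \<and> real k / 2 ^ n < g k \<and> g k \<le> (real k + 1) / 2 ^ n" if "k \<in> Sk" for k
    unfolding g_def using someI_ex[OF ex[OF that, unfolded Bex_def]] .
  have "inj_on g Sk"
  proof (rule inj_onI)
    fix k k' assume "k \<in> Sk" "k' \<in> Sk" "g k = g k'"
    then show "k = k'" using g grid_unique by metis
  qed
  moreover have "g ` Sk \<subseteq> P" using g by auto
  moreover have "finite P" using P by (simp add: osc_good_def)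
  ultimately show "card {k::nat. (real k + 1) / 2 ^ n \<le> T \<and> e < \<bar>f ((real k + 1) / 2 ^ n) - f (real k / 2 ^ n)\<bar>} \<le> card P"
    unfolding Sk_def[symmetric] by (rule card_inj_on_le)
qed

context P2ctx begin

lemma F_mono: "s \<le> t \<Longrightarrow> sets (F s) \<subseteq> sets (F t)"
  using conjunct1[OF conjunct2[OF uc[unfolded usual_conditions_def]]] by blast

lemma F_space: "space (F t) = space M"
  using filt unfolding filt_ok_def by blast

definition gset :: "real \<Rightarrow> nat \<Rightarrow> 'a \<Rightarrow> real \<Rightarrow> nat set" where
  "gset c n \<omega> t = {k. (real k + 1) / 2 ^ n < t \<and> c < \<bar>X ((real k + 1) / 2 ^ n) \<omega> - X (real k / 2 ^ n) \<omega>\<bar>}"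

definition Vset :: "real \<Rightarrow> nat \<Rightarrow> ('a \<times> real) set" where
  "Vset c m = {x \<in> space M \<times> {0..}. \<forall>n. card (gset c n (fst x) (snd x)) \<le> m}"

definition Gk :: "real \<Rightarrow> nat \<Rightarrow> nat \<Rightarrow> ('a \<times> real) set" where
  "Gk c n k = {\<omega> \<in> space M. c < \<bar>X ((real k + 1) / 2 ^ n) \<omega> - X (real k / 2 ^ n) \<omega>\<bar>} \<times> {(real k + 1) / 2 ^ n<..}"

lemma gset_finite: "finite (gset c n \<omega> t)"
proof -
  have q: "(0::real) < 2 ^ n" by simp
  have "gset c n \<omega> t \<subseteq> {..nat \<lceil>2 ^ n * t\<rceil>}"
  proof
    fix k assume "k \<in> gset c n \<omega> t"
    then have "(real k + 1) / 2 ^ n < t" by (simp add: gset_def)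
    then have "real k + 1 \<le> 2 ^ n * t" using q by (simp add: divide_less_eq mult.commute)
    then have "real_of_int (int k) \<le> real_of_int \<lceil>2 ^ n * t\<rceil>"
      using le_of_int_ceiling[of "2 ^ n * t"] by (simp only: of_int_of_nat_eq)
    then have "int k \<le> \<lceil>2 ^ n * t\<rceil>" by (simp only: of_int_le_iff)
    then show "k \<in> {..nat \<lceil>2 ^ n * t\<rceil>}" by (simp add: le_nat_iff)
  qed
  then show ?thesis by (rule finite_subset) simp
qed

lemma Gk_sets: "Gk c n k \<in> sets (pred_sigma M F)"
proof -
  define s where "s = (real k + 1) / 2 ^ n"
  have s0: "0 \<le> s" by (simp add: s_def)
  define B where "B = {\<omega> \<in> space M. c < \<bar>X ((real k + 1) / 2 ^ n) \<omega> - X (real k / 2 ^ n) \<omega>\<bar>}"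
  have mX1: "X ((real k + 1) / 2 ^ n) \<in> borel_measurable (F s)" using ad s0 unfolding adapted_def s_def by auto
  have "X (real k / 2 ^ n) \<in> borel_measurable (F (real k / 2 ^ n))" using ad unfolding adapted_def by auto
  moreover have "subalgebra (F s) (F (real k / 2 ^ n))"
  proof -
    have "real k / 2 ^ n \<le> s" unfolding s_def by (simp add: divide_right_mono)
    then show ?thesis unfolding subalgebra_def using F_mono F_space by auto
  qed
  ultimately have mX0: "X (real k / 2 ^ n) \<in> borel_measurable (F s)" by (rule measurable_from_subalg[rotated])
  have "{\<omega> \<in> space (F s). c < \<bar>X ((real k + 1) / 2 ^ n) \<omega> - X (real k / 2 ^ n) \<omega>\<bar>} \<in> sets (F s)"
    using mX0 mX1 by measurable
  then have B: "B \<in> sets (F s)" using filt unfolding filt_ok_def B_def by auto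
  have "B \<times> {s<..} = (\<Union>m::nat. B \<times> {s<..s + real m})"
  proof (intro set_eqI iffI)
    fix z assume z: "z \<in> B \<times> {s<..}"
    obtain m :: nat where "snd z - s \<le> real m" using real_arch_simple by blast
    then show "z \<in> (\<Union>m::nat. B \<times> {s<..s + real m})" using z by (cases z) (auto intro!: exI[of _ m])
  qed auto
  moreover have "B \<times> {s<..s + real m} \<in> sets (pred_sigma M F)" for m
    by (rule pred_gen_Ioc[OF filt B s0]) simp
  ultimately have "B \<times> {s<..} \<in> sets (pred_sigma M F)" by auto
  then show ?thesis by (simp add: Gk_def B_def s_def)
qed

definition gcount :: "real \<Rightarrow> nat \<Rightarrow> 'a \<times> real \<Rightarrow> ennreal" where
  "gcount c n x = (\<Sum>k. indicator (Gk c n k) x)"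

lemma gcount_meas[measurable]: "gcount c n \<in> borel_measurable (pred_sigma M F)"
  unfolding gcount_def
  by (rule borel_measurable_suminf_order) (rule borel_measurable_indicator[OF Gk_sets])

lemma gcount_eq:
  assumes "fst x \<in> space M"
  shows "gcount c n x = of_nat (card (gset c n (fst x) (snd x)))"
proof -
  have "(\<lambda>k. indicator (Gk c n k) x :: ennreal) = (\<lambda>k. indicator (gset c n (fst x) (snd x)) k)"
    using assms by (cases x) (auto simp: fun_eq_iff indicator_def Gk_def gset_def)
  then have "gcount c n x = (\<Sum>k. indicator (gset c n (fst x) (snd x)) k :: ennreal)"
    by (simp add: gcount_def)
  also have "\<dots> = (\<Sum>k\<in>gset c n (fst x) (snd x). indicator (gset c n (fst x) (snd x)) k :: ennreal)"
    by (rule suminf_finite[OF gset_finite]) simp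
  also have "\<dots> = (\<Sum>k\<in>gset c n (fst x) (snd x). 1)"
    by (rule sum.cong) auto
  also have "\<dots> = of_nat (card (gset c n (fst x) (snd x)))" by simp
  finally show ?thesis .
qed

lemma Vset_sets: "Vset c m \<in> sets (pred_sigma M F)"
proof -
  have "{x \<in> space (pred_sigma M F). \<forall>n. gcount c n x \<le> of_nat m} \<in> sets (pred_sigma M F)"
    by measurable
  moreover have "{x \<in> space (pred_sigma M F). \<forall>n. gcount c n x \<le> of_nat m} = Vset c m"
  proof (intro set_eqI iffI)
    fix x assume x: "x \<in> {x \<in> space (pred_sigma M F). \<forall>n. gcount c n x \<le> of_nat m}"
    then have sp: "x \<in> space M \<times> {0..}" by (simp add: space_pred)
    have "card (gset c n (fst x) (snd x)) \<le> m" for n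
    proof -
      have "gcount c n x \<le> of_nat m" using x by simp
      then have "(of_nat (card (gset c n (fst x) (snd x))) :: ennreal) \<le> of_nat m"
        using gcount_eq[of x c n] sp by (simp add: mem_Times_iff)
      then show ?thesis by (simp only: of_nat_le_iff)
    qed
    then show "x \<in> Vset c m" using sp by (simp add: Vset_def)
  next
    fix x assume x: "x \<in> Vset c m"
    then have sp: "x \<in> space M \<times> {0..}" by (simp add: Vset_def)
    have "gcount c n x \<le> of_nat m" for n
    proof -
      have "card (gset c n (fst x) (snd x)) \<le> m" using x by (simp add: Vset_def)
      then have "(of_nat (card (gset c n (fst x) (snd x))) :: ennreal) \<le> of_nat m" by (simp only: of_nat_le_iff)
      then show ?thesis using gcount_eq[of x c n] sp by (simp add: mem_Times_iff)
    qed
    then show "x \<in> {x \<in> space (pred_sigma M F). \<forall>n. gcount c n x \<le> of_nat m}"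
      using sp by (simp add: space_pred)
  qed
  ultimately show ?thesis by (simp only:)
qed

end

lemma ev_pow: "0 < d \<Longrightarrow> eventually (\<lambda>n. 1 / 2 ^ n < (d::real)) sequentially"
proof -
  assume d: "0 < d"
  obtain n0 :: nat where n0: "1 / d < 2 ^ n0" using real_arch_pow[of 2 "1 / d"] by auto
  show ?thesis unfolding eventually_sequentially
  proof (intro exI[of _ n0] allI impI)
    fix n assume "n0 \<le> n"
    then have "(2::real) ^ n0 \<le> 2 ^ n" by (rule power_increasing) auto
    then have "1 / d < 2 ^ n" using n0 by linarith
    then have "1 < d * 2 ^ n" using d by (simp add: divide_less_eq mult.commute)
    then show "1 / 2 ^ n < d" by (simp add: divide_less_eq mult.commute)
  qed
qed

definition kk :: "nat \<Rightarrow> real \<Rightarrow> nat" where "kk n u = nat (\<lceil>real (2 ^ n :: nat) * u\<rceil> - 1)"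

lemma kk_facts:
  assumes "0 < u"
  shows "real (kk n u) / 2 ^ n < u" "u \<le> (real (kk n u) + 1) / 2 ^ n"
    "u - 1 / 2 ^ n \<le> real (kk n u) / 2 ^ n" "(real (kk n u) + 1) / 2 ^ n < u + 1 / 2 ^ n"
proof -
  have pos: "0 < (2 ^ n :: nat)" by simp
  show a: "real (kk n u) / 2 ^ n < u" using ceil_piece(2)[OF pos assms] by (simp add: kk_def)
  show b: "u \<le> (real (kk n u) + 1) / 2 ^ n" using ceil_piece(3)[OF pos assms] by (simp add: kk_def)
  have e: "(real (kk n u) + 1) / 2 ^ n = real (kk n u) / 2 ^ n + 1 / 2 ^ n" by (simp add: add_divide_distrib)
  show "u - 1 / 2 ^ n \<le> real (kk n u) / 2 ^ n" using b unfolding e by linarith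
  show "(real (kk n u) + 1) / 2 ^ n < u + 1 / 2 ^ n" using a unfolding e by linarith
qed

context P2ctx begin

lemma X_rc:
  assumes om: "\<omega> \<in> space M" and s: "0 \<le> s" and d: "0 < d"
  shows "\<exists>\<delta>>0. \<forall>w. s \<le> w \<and> w < s + \<delta> \<longrightarrow> \<bar>X w \<omega> - X s \<omega>\<bar> < d"
  using Y_right[OF cad _ om s d, of "\<lambda>_. 0"] by simp

lemma X_ll:
  assumes om: "\<omega> \<in> space M" and s: "0 < s" and d: "0 < d"
  shows "\<exists>\<delta>>0. \<forall>w. s - \<delta> < w \<and> w < s \<longrightarrow> \<bar>X w \<omega> - Xminus X s \<omega>\<bar> < d"
proof -
  obtain \<delta> where \<delta>: "\<delta> > 0" "\<forall>w. s - \<delta> < w \<and> w < s \<and> 0 \<le> w \<longrightarrow> \<bar>X w \<omega> - Xminus X s \<omega>\<bar> < d"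
    using Y_left[OF cad _ om _ d, of "\<lambda>_. 0" s] s by auto
  show ?thesis
  proof (intro exI[of _ "min \<delta> s"] conjI allI impI)
    show "0 < min \<delta> s" using \<delta>(1) s by simp
    fix w assume w: "s - min \<delta> s < w \<and> w < s"
    then have "s - \<delta> < w" "0 \<le> w" by (auto simp: min_def split: if_splits)
    then show "\<bar>X w \<omega> - Xminus X s \<omega>\<bar> < d" using \<delta>(2) w by blast
  qed
qed

lemma gset_bounded:
  assumes om: "\<omega> \<in> space M" and t: "0 \<le> t" and c: "0 < c"
  shows "\<exists>m. \<forall>n. card (gset c n \<omega> t) \<le> m"
proof -
  obtain P where P: "osc_good (\<lambda>s. X s \<omega>) c t P"
  proof (rule exE[OF osc_partition[OF t c]])
    fix s d :: real assume "0 \<le> s" "0 < d"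
    then show "\<exists>\<delta>>0. \<forall>w. s \<le> w \<and> w < s + \<delta> \<longrightarrow> \<bar>X w \<omega> - X s \<omega>\<bar> < d" by (rule X_rc[OF om])
  next
    fix s :: real assume "0 < s"
    then show "\<exists>L. \<forall>d>0. \<exists>\<delta>>0. \<forall>w. s - \<delta> < w \<and> w < s \<longrightarrow> \<bar>X w \<omega> - L\<bar> < d"
      using X_ll[OF om] by blast
  qed
  show ?thesis
  proof (intro exI[of _ "card P"] allI)
    fix n
    have "gset c n \<omega> t \<subseteq> {k::nat. (real k + 1) / 2 ^ n \<le> t \<and> c < \<bar>X ((real k + 1) / 2 ^ n) \<omega> - X (real k / 2 ^ n) \<omega>\<bar>}"
      by (auto simp: gset_def)
    then have "card (gset c n \<omega> t) \<le> card {k::nat. (real k + 1) / 2 ^ n \<le> t \<and> c < \<bar>X ((real k + 1) / 2 ^ n) \<omega> - X (real k / 2 ^ n) \<omega>\<bar>}"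
      by (rule card_mono[OF osc_grid_bound(1)[OF P]])
    also have "\<dots> \<le> card P" by (rule osc_grid_bound(2)[OF P])
    finally show "card (gset c n \<omega> t) \<le> card P" .
  qed
qed

lemma count_jumps:
  assumes om: "\<omega> \<in> space M" and U: "finite U"
    and Uc: "\<forall>u\<in>U. 0 < u \<and> u < t \<and> c < \<bar>jump X u \<omega>\<bar>"
  shows "\<exists>n. card U \<le> card (gset c n \<omega> t)"
proof -
  let ?a = "\<lambda>n u. real (kk n u) / 2 ^ n"
  let ?b = "\<lambda>n u. (real (kk n u) + 1) / 2 ^ n"
  have ev1: "\<forall>u\<in>U. eventually (\<lambda>n. c < \<bar>X (?b n u) \<omega> - X (?a n u) \<omega>\<bar>) sequentially"
  proof
    fix u assume uU: "u \<in> U"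
    then have u0: "0 < u" and cj: "c < \<bar>jump X u \<omega>\<bar>" using Uc by auto
    define J where "J = X u \<omega> - Xminus X u \<omega>"
    have cJ: "c < \<bar>J\<bar>" using cj by (simp add: J_def jump_def)
    define e where "e = (\<bar>J\<bar> - c) / 2"
    have e0: "0 < e" using cJ by (simp add: e_def)
    obtain d1 where d1: "d1 > 0" "\<forall>w. u \<le> w \<and> w < u + d1 \<longrightarrow> \<bar>X w \<omega> - X u \<omega>\<bar> < e"
      using X_rc[OF om _ e0, of u] u0 by auto
    obtain d2 where d2: "d2 > 0" "\<forall>w. u - d2 < w \<and> w < u \<longrightarrow> \<bar>X w \<omega> - Xminus X u \<omega>\<bar> < e"
      using X_ll[OF om u0 e0] by auto
    have "eventually (\<lambda>n. 1 / 2 ^ n < min d1 d2) sequentially" by (rule ev_pow) (use d1 d2 in simp)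
    then show "eventually (\<lambda>n. c < \<bar>X (?b n u) \<omega> - X (?a n u) \<omega>\<bar>) sequentially"
    proof (rule eventually_mono)
      fix n assume n: "1 / 2 ^ n < min d1 d2"
      note kf = kk_facts[OF u0, of n]
      have "\<bar>X (?b n u) \<omega> - X u \<omega>\<bar> < e" using d1(2) kf n by auto
      moreover have "\<bar>X (?a n u) \<omega> - Xminus X u \<omega>\<bar> < e" using d2(2) kf n by auto
      ultimately show "c < \<bar>X (?b n u) \<omega> - X (?a n u) \<omega>\<bar>" using cJ unfolding e_def J_def
        by (auto simp: abs_less_iff abs_if split: if_splits)
    qed
  qed
  have ev2: "\<forall>u\<in>U. eventually (\<lambda>n. ?b n u < t) sequentially"
  proof
    fix u assume uU: "u \<in> U"
    then have u0: "0 < u" and ut: "u < t" using Uc by auto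
    have "eventually (\<lambda>n. 1 / 2 ^ n < t - u) sequentially" by (rule ev_pow) (use ut in simp)
    then show "eventually (\<lambda>n. ?b n u < t) sequentially"
    proof (rule eventually_mono)
      fix n assume "1 / 2 ^ n < t - u"
      then show "?b n u < t" using kk_facts(4)[OF u0, of n] by linarith
    qed
  qed
  have ev3: "\<forall>u\<in>U. eventually (\<lambda>n. \<forall>u'\<in>U. u' \<noteq> u \<longrightarrow> kk n u' \<noteq> kk n u) sequentially"
  proof
    fix u assume uU: "u \<in> U"
    show "eventually (\<lambda>n. \<forall>u'\<in>U. u' \<noteq> u \<longrightarrow> kk n u' \<noteq> kk n u) sequentially"
    proof (rule eventually_ball_finite[OF U], rule ballI)
      fix u' assume u'U: "u' \<in> U"
      show "eventually (\<lambda>n. u' \<noteq> u \<longrightarrow> kk n u' \<noteq> kk n u) sequentially"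
      proof (cases "u' = u")
        case True then show ?thesis by simp
      next
        case False
        then have "0 < \<bar>u - u'\<bar>" by simp
        then have "eventually (\<lambda>n. 1 / 2 ^ n < \<bar>u - u'\<bar>) sequentially" by (rule ev_pow)
        then show ?thesis
        proof (rule eventually_mono, intro impI notI)
          fix n assume n: "1 / 2 ^ n < \<bar>u - u'\<bar>" and eq: "kk n u' = kk n u"
          have u0: "0 < u" "0 < u'" using uU u'U Uc by auto
          have e: "(real (kk n u) + 1) / 2 ^ n = real (kk n u) / 2 ^ n + 1 / 2 ^ n" by (simp add: add_divide_distrib)
          have "real (kk n u) / 2 ^ n < u" "u \<le> (real (kk n u) + 1) / 2 ^ n"
               "real (kk n u) / 2 ^ n < u'" "u' \<le> (real (kk n u) + 1) / 2 ^ n"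
            using kk_facts(1,2)[OF u0(1), of n] kk_facts(1,2)[OF u0(2), of n] eq by auto
          then show False using n unfolding e by (auto simp: abs_if split: if_splits)
        qed
      qed
    qed
  qed
  have "eventually (\<lambda>n. \<forall>u\<in>U. (c < \<bar>X (?b n u) \<omega> - X (?a n u) \<omega>\<bar> \<and> ?b n u < t) \<and>
      (\<forall>u'\<in>U. u' \<noteq> u \<longrightarrow> kk n u' \<noteq> kk n u)) sequentially"
  proof (intro eventually_ball_finite[OF U] ballI)
    fix u assume u: "u \<in> U"
    show "eventually (\<lambda>n. (c < \<bar>X (?b n u) \<omega> - X (?a n u) \<omega>\<bar> \<and> ?b n u < t) \<and>
      (\<forall>u'\<in>U. u' \<noteq> u \<longrightarrow> kk n u' \<noteq> kk n u)) sequentially"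
      by (intro eventually_conj) (use ev1 ev2 ev3 u in blast)+
  qed
  then obtain n where n: "\<forall>u\<in>U. (c < \<bar>X (?b n u) \<omega> - X (?a n u) \<omega>\<bar> \<and> ?b n u < t) \<and>
      (\<forall>u'\<in>U. u' \<noteq> u \<longrightarrow> kk n u' \<noteq> kk n u)"
    unfolding eventually_sequentially by blast
  have inj: "inj_on (kk n) U" using n by (auto simp: inj_on_def)
  have sub: "kk n ` U \<subseteq> gset c n \<omega> t" using n by (auto simp: gset_def)
  have "card U = card (kk n ` U)" using card_image[OF inj] by simp
  also have "\<dots> \<le> card (gset c n \<omega> t)" by (rule card_mono[OF gset_finite sub])
  finally show ?thesis by blast
qed

lemma Vjumps:
  assumes om: "\<omega> \<in> space M"
  shows "finite {u. 0 < u \<and> (\<omega>, u) \<in> Vset c m \<and> c < \<bar>jump X u \<omega>\<bar>} \<and>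
         card {u. 0 < u \<and> (\<omega>, u) \<in> Vset c m \<and> c < \<bar>jump X u \<omega>\<bar>} \<le> Suc m"
proof -
  define U where "U = {u. 0 < u \<and> (\<omega>, u) \<in> Vset c m \<and> c < \<bar>jump X u \<omega>\<bar>}"
  have claim: "card U' \<le> Suc m" if fin: "finite U'" and sub: "U' \<subseteq> U" for U'
  proof (cases "U' = {}")
    case True then show ?thesis by simp
  next
    case False
    define us where "us = Max U'"
    have usU: "us \<in> U'" unfolding us_def using Max_in[OF fin False] .
    define U'' where "U'' = U' - {us}"
    have fin'': "finite U''" using fin by (simp add: U''_def)
    have "\<forall>u\<in>U''. 0 < u \<and> u < us \<and> c < \<bar>jump X u \<omega>\<bar>"
    proof
      fix u assume u: "u \<in> U''"
      then have "u \<in> U'" "u \<noteq> us" by (auto simp: U''_def)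
      moreover have "u \<le> us" unfolding us_def using Max_ge[OF fin \<open>u \<in> U'\<close>] .
      ultimately show "0 < u \<and> u < us \<and> c < \<bar>jump X u \<omega>\<bar>" using sub by (auto simp: U_def)
    qed
    then obtain n where n: "card U'' \<le> card (gset c n \<omega> us)" using count_jumps[OF om fin''] by blast
    have "(\<omega>, us) \<in> Vset c m" using usU sub by (auto simp: U_def)
    then have "card (gset c n \<omega> us) \<le> m" by (simp add: Vset_def)
    moreover have "card U' = Suc (card U'')" unfolding U''_def using card.remove[OF fin usU] .
    ultimately show ?thesis using n by simp
  qed
  have finU: "finite U"
  proof (rule ccontr)
    assume "\<not> finite U"
    then obtain U' where "finite U'" "card U' = Suc (Suc m)" "U' \<subseteq> U"
      using infinite_arbitrarily_large by blast
    then show False using claim by fastforce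
  qed
  show ?thesis using finU claim[OF finU] unfolding U_def by simp
qed

end

lemma pow_bound: "1 / 2 ^ (2 * Suc i) \<le> (1 / real (Suc i)) / (2::real)"
proof -
  have "2 * Suc i < 2 ^ (2 * Suc i)" by (rule less_exp)
  then have "real (2 * Suc i) \<le> (2::real) ^ (2 * Suc i)"
    by (metis less_imp_le of_nat_less_iff of_nat_numeral of_nat_power)
  then have "2 * real (Suc i) \<le> (2::real) ^ (2 * Suc i)" by simp
  then show ?thesis by (simp add: field_simps)
qed

context P2ctx begin

definition Rp :: "nat \<Rightarrow> nat \<Rightarrow> ('a \<times> real) set" where
  "Rp i m = Rset \<inter> {x. 1 / real (Suc i) \<le> pt (fst x) (snd x)} \<inter> Vset (1 / real (Suc i) / 4) m"

lemma Rp_sets: "Rp i m \<in> sets (pred_sigma M F)"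
proof -
  have "{x \<in> space (pred_sigma M F). 1 / real (Suc i) \<le> pt (fst x) (snd x)} \<in> sets (pred_sigma M F)"
    by measurable
  then have "Rset \<inter> {x \<in> space (pred_sigma M F). 1 / real (Suc i) \<le> pt (fst x) (snd x)} \<inter> Vset (1 / real (Suc i) / 4) m
     \<in> sets (pred_sigma M F)"
    using Rset_sets Vset_sets by auto
  moreover have "Rset \<inter> {x \<in> space (pred_sigma M F). 1 / real (Suc i) \<le> pt (fst x) (snd x)} \<inter> Vset (1 / real (Suc i) / 4) m
     = Rp i m" using Rset_sub by (auto simp: Rp_def space_pred)
  ultimately show ?thesis by simp
qed

lemma Rp_sub: "Rp i m \<subseteq> space M \<times> {0..}" using Rset_sub by (auto simp: Rp_def)

lemma Rp_null: "AE \<omega> in M. emeasure (dA A \<omega>) {t. (\<omega>, t) \<in> Rp i m} = 0"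
proof -
  define n0 where "n0 = 2 * Suc i"
  define c0 where "c0 = 1 / real (Suc i)"
  let ?W = "\<lambda>\<omega> t x. indicator {(\<omega>, t, x). (\<omega>, t) \<in> Rp i m \<and> x \<in> dyI n0 (pt \<omega> t)} (\<omega>, t, x) :: ennreal"
  have W: "Ptilde_measurable M F ?W" by (rule W_dy_ptilde[OF Rp_sets])
  define Rw where "Rw \<omega> = {t. (\<omega>, t) \<in> Rp i m}" for \<omega>
  have Rwb: "Rw \<omega> \<in> sets (dA A \<omega>)" if om: "\<omega> \<in> space M" for \<omega>
    unfolding Rw_def using sec_borel[OF filt Rp_sets om] by simp
  have nu_eq: "int_nu \<nu> ?W {0..} \<omega> = \<infinity> * emeasure (dA A \<omega>) (Rw \<omega>)" if om: "\<omega> \<in> space M" for \<omega>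
  proof -
    have "int_nu \<nu> ?W {0..} \<omega> = (\<integral>\<^sup>+ t. indicator (Rw \<omega>) t * emeasure (K \<omega> t) (dyI n0 (pt \<omega> t)) \<partial>dA A \<omega>)"
      unfolding Rw_def by (rule fiber_formula[OF om Rp_sub W])
    also have "\<dots> = (\<integral>\<^sup>+ t. \<infinity> * indicator (Rw \<omega>) t \<partial>dA A \<omega>)"
    proof (rule nn_integral_cong)
      fix t show "indicator (Rw \<omega>) t * emeasure (K \<omega> t) (dyI n0 (pt \<omega> t)) = \<infinity> * indicator (Rw \<omega>) t"
      proof (cases "t \<in> Rw \<omega>")
        case True
        then have "q n0 \<omega> t = \<infinity>" by (auto simp: Rw_def Rp_def Rset_def)
        then show ?thesis using True by (simp add: q_def)
      next
        case False then show ?thesis by simp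
      qed
    qed
    also have "\<dots> = \<infinity> * emeasure (dA A \<omega>) (Rw \<omega>)" by (rule nn_integral_cmult_indicator[OF Rwb[OF om]])
    finally show ?thesis .
  qed
  have mu_le: "int_mu X ?W {0..} \<omega> \<le> of_nat (Suc m)" if om: "\<omega> \<in> space M" for \<omega>
  proof -
    define U where "U = {u. 0 < u \<and> (\<omega>, u) \<in> Vset (c0 / 4) m \<and> c0 / 4 < \<bar>jump X u \<omega>\<bar>}"
    have U: "finite U" "card U \<le> Suc m" using Vjumps[OF om, of "c0 / 4" m] unfolding U_def by auto
    have "int_mu X ?W {0..} \<omega> \<le> (\<integral>\<^sup>+ s. indicator U s \<partial>count_space UNIV)"
      unfolding int_mu_def
    proof (rule nn_integral_mono)
      fix s
      show "indicator {s \<in> {0..}. 0 < s \<and> jump X s \<omega> \<noteq> 0} s * ?W \<omega> s (jump X s \<omega>) \<le> indicator U s"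
      proof (cases "0 < s \<and> (\<omega>, s) \<in> Rp i m \<and> jump X s \<omega> \<in> dyI n0 (pt \<omega> s)")
        case True
        then have cl: "\<bar>jump X s \<omega> - pt \<omega> s\<bar> < 1 / 2 ^ n0" using dyI_close by blast
        have "1 / 2 ^ n0 \<le> c0 / 2" unfolding n0_def c0_def by (rule pow_bound)
        moreover have "c0 \<le> pt \<omega> s" using True by (auto simp: Rp_def c0_def)
        moreover have c00: "0 < c0" by (simp add: c0_def)
        ultimately have "c0 / 4 < \<bar>jump X s \<omega>\<bar>" using cl by (auto simp: abs_less_iff abs_if split: if_splits)
        moreover have "(\<omega>, s) \<in> Vset (c0 / 4) m" using True by (auto simp: Rp_def c0_def)
        ultimately have "s \<in> U" using True by (auto simp: U_def)
        then show ?thesis by (auto simp: indicator_def)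
      next
        case False then show ?thesis by (auto simp: indicator_def)
      qed
    qed
    also have "\<dots> = of_nat (card U)" using U(1) by (simp add: nn_integral_indicator emeasure_count_space_finite)
    also have "\<dots> \<le> of_nat (Suc m)" using U(2) by (simp only: of_nat_le_iff)
    finally show ?thesis .
  qed
  have eq: "(\<integral>\<^sup>+ \<omega>. int_mu X ?W {0..} \<omega> \<partial>M) = (\<integral>\<^sup>+ \<omega>. int_nu \<nu> ?W {0..} \<omega> \<partial>M)"
    using comp W unfolding is_compensator_def by blast
  have "(\<integral>\<^sup>+ \<omega>. int_mu X ?W {0..} \<omega> \<partial>M) \<le> (\<integral>\<^sup>+ \<omega>. of_nat (Suc m) \<partial>M)"
    by (rule nn_integral_mono) (rule mu_le)
  also have "\<dots> = of_nat (Suc m)" using prob_space.emeasure_space_1[OF ps] by simp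
  finally have fin: "(\<integral>\<^sup>+ \<omega>. int_nu \<nu> ?W {0..} \<omega> \<partial>M) \<noteq> \<infinity>" using eq
    by (metis ennreal_of_nat_neq_top infinity_ennreal_def neq_top_trans)
  have "AE \<omega> in M. int_nu \<nu> ?W {0..} \<omega> \<noteq> \<infinity>"
    by (rule nn_integral_PInf_AE[OF int_nu_meas[OF filt comp W] fin])
  then show ?thesis using AE_space
  proof eventually_elim
    case (elim \<omega>)
    then have "\<infinity> * emeasure (dA A \<omega>) (Rw \<omega>) \<noteq> \<infinity>" using nu_eq by simp
    then show ?case unfolding Rw_def by (auto simp: ennreal_mult_eq_top_iff)
  qed
qed

end

context P2ctx begin

lemma R_null: "AE \<omega> in M. emeasure (dA A \<omega>) {t. (\<omega>, t) \<in> Rset} = 0"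
proof -
  have "AE \<omega> in M. \<forall>i m. emeasure (dA A \<omega>) {t. (\<omega>, t) \<in> Rp i m} = 0"
    using Rp_null by (simp add: AE_all_countable)
  then show ?thesis using AE_space
  proof eventually_elim
    case (elim \<omega>)
    then have z: "\<And>i m. emeasure (dA A \<omega>) {t. (\<omega>, t) \<in> Rp i m} = 0" and om: "\<omega> \<in> space M" by auto
    have sb: "{t. (\<omega>, t) \<in> Rp i m} \<in> sets (dA A \<omega>)" for i m
      using sec_borel[OF filt Rp_sets om] by simp
    have sub: "{t. (\<omega>, t) \<in> Rset} \<subseteq> (\<Union>i. \<Union>m. {t. (\<omega>, t) \<in> Rp i m})"
    proof
      fix t assume t: "t \<in> {t. (\<omega>, t) \<in> Rset}"
      then have t0: "0 \<le> t" and ptp: "0 < pt \<omega> t" by (auto simp: Rset_def Dset_def pt_def)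
      obtain i where i: "inverse (real (Suc i)) < pt \<omega> t" using reals_Archimedean[OF ptp] by blast
      have c: "0 < 1 / real (Suc i) / 4" by simp
      obtain m where m: "\<forall>n. card (gset (1 / real (Suc i) / 4) n \<omega> t) \<le> m"
        using gset_bounded[OF om t0 c] by blast
      have "(\<omega>, t) \<in> Vset (1 / real (Suc i) / 4) m" using m om t0 by (simp add: Vset_def)
      then have "(\<omega>, t) \<in> Rp i m" using t i by (auto simp: Rp_def inverse_eq_divide)
      then show "t \<in> (\<Union>i. \<Union>m. {t. (\<omega>, t) \<in> Rp i m})" by blast
    qed
    have inner: "emeasure (dA A \<omega>) (\<Union>m. {t. (\<omega>, t) \<in> Rp i m}) = 0" for i
      by (rule emeasure_UN_eq_0[OF z]) (use sb in auto)
    have U0: "emeasure (dA A \<omega>) (\<Union>i. \<Union>m. {t. (\<omega>, t) \<in> Rp i m}) = 0"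
      by (rule emeasure_UN_eq_0[OF inner]) (use sb in auto)
    have "emeasure (dA A \<omega>) {t. (\<omega>, t) \<in> Rset} \<le> emeasure (dA A \<omega>) (\<Union>i. \<Union>m. {t. (\<omega>, t) \<in> Rp i m})"
      by (rule emeasure_mono[OF sub]) (use sb in auto)
    then show ?case using U0 by simp
  qed
qed

lemma g_zero: "AE \<omega> in M. int_nu \<nu> (\<lambda>\<omega> t x. indicator (Gamma0 X b) (\<omega>, t, x)) {0..} \<omega> = 0"
  using S1_null R_null AE_space
proof eventually_elim
  case (elim \<omega>)
  then have s1: "emeasure (dA A \<omega>) {t. (\<omega>, t) \<in> S1} = 0" and r: "emeasure (dA A \<omega>) {t. (\<omega>, t) \<in> Rset} = 0"
    and om: "\<omega> \<in> space M" by auto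
  let ?WD = "\<lambda>\<omega> t x. indicator {(\<omega>, t, x). (\<omega>, t) \<in> Dset \<and> x \<in> {pt \<omega> t}} (\<omega>, t, x) :: ennreal"
  have "int_nu \<nu> (\<lambda>\<omega> t x. indicator (Gamma0 X b) (\<omega>, t, x)) {0..} \<omega> = int_nu \<nu> ?WD {0..} \<omega>"
    unfolding int_nu_def
  proof (rule nn_integral_cong)
    fix z :: "real \<times> real"
    show "indicator ({0..} \<times> UNIV) z * indicator (Gamma0 X b) (\<omega>, fst z, snd z) =
          indicator ({0..} \<times> UNIV) z * ?WD \<omega> (fst z) (snd z)"
      using om by (cases z) (auto simp: indicator_def Gamma0_def Dset_def pt_def)
  qed
  also have "\<dots> = (\<integral>\<^sup>+ t. indicator {t. (\<omega>, t) \<in> Dset} t * emeasure (K \<omega> t) {pt \<omega> t} \<partial>dA A \<omega>)"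
    by (rule fiber_formula[OF om _ W_graph_ptilde[OF Dset_sets]]) (auto simp: Dset_def)
  also have "\<dots> \<le> (\<integral>\<^sup>+ t. \<infinity> * indicator ({t. (\<omega>, t) \<in> S1} \<union> {t. (\<omega>, t) \<in> Rset}) t \<partial>dA A \<omega>)"
  proof (rule nn_integral_mono)
    fix t
    show "indicator {t. (\<omega>, t) \<in> Dset} t * emeasure (K \<omega> t) {pt \<omega> t}
        \<le> \<infinity> * indicator ({t. (\<omega>, t) \<in> S1} \<union> {t. (\<omega>, t) \<in> Rset}) t"
    proof (cases "(\<omega>, t) \<in> Dset \<and> (\<omega>, t) \<notin> S1 \<and> (\<omega>, t) \<notin> Rset")
      case True
      then obtain n where n: "q n \<omega> t < \<infinity>" by (auto simp: Rset_def less_top)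
      have "\<not> 0 < (INF n. q n \<omega> t)" using True n by (auto simp: S1_def)
      then have I0: "(INF n. q n \<omega> t) = 0" by simp
      have t0: "0 \<le> t" using True by (auto simp: Dset_def)
      have "(INF n. q n \<omega> t) = emeasure (K \<omega> t) {pt \<omega> t}"
        unfolding q_def by (rule K_atom_INF[OF K_sets[OF om t0]]) (use n in \<open>auto simp: q_def less_top\<close>)
      then show ?thesis using I0 by simp
    next
      case False then show ?thesis by (auto simp: indicator_def)
    qed
  qed
  also have "\<dots> = \<infinity> * emeasure (dA A \<omega>) ({t. (\<omega>, t) \<in> S1} \<union> {t. (\<omega>, t) \<in> Rset})"
    by (rule nn_integral_cmult_indicator) (use sec_borel[OF filt S1_sets om] sec_borel[OF filt Rset_sets om] in auto)
  also have "\<dots> = 0"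
  proof -
    have "emeasure (dA A \<omega>) ({t. (\<omega>, t) \<in> S1} \<union> {t. (\<omega>, t) \<in> Rset}) \<le>
        emeasure (dA A \<omega>) {t. (\<omega>, t) \<in> S1} + emeasure (dA A \<omega>) {t. (\<omega>, t) \<in> Rset}"
      by (rule emeasure_subadditive) (use sec_borel[OF filt S1_sets om] sec_borel[OF filt Rset_sets om] in auto)
    then show ?thesis using s1 r by simp
  qed
  finally show ?case by simp
qed

end

theorem proposition3p5:
  fixes M :: "'a measure" and F :: "real \<Rightarrow> 'a measure"
    and X :: "real \<Rightarrow> 'a \<Rightarrow> real" and b :: "real \<Rightarrow> real"
    and \<nu> :: "'a \<Rightarrow> (real \<times> real) measure"
  assumes "prob_space M"
    and "usual_conditions M F"
    and "semimartingale M F X"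
    and "continuous_on {0..} b"
    and "\<forall>\<omega>\<in>space M. X 0 \<omega> < b 0"
    and "is_compensator M F X \<nu>"
  shows "((AE \<omega> in M. \<forall>t\<ge>0. int_nu \<nu> (\<lambda>\<omega> t x. indicator (Gamma0 X b) (\<omega>, t, x)) {0..t} \<omega> = 0)
            \<longrightarrow> J0 M X b \<in> null_sets M)
       \<and> (\<forall>A K. predictable_disintegration M F \<nu> A K \<longrightarrow> J0 M X b \<in> null_sets M)"
proof (intro conjI impI allI)
  have filt: "filt_ok M F" by (rule uc_filt[OF assms(2)])
  have ad: "adapted F X" and cad: "cadlag M X" using assms(3) unfolding semimartingale_def by auto
  assume H: "AE \<omega> in M. \<forall>t\<ge>0. int_nu \<nu> (\<lambda>\<omega> t x. indicator (Gamma0 X b) (\<omega>, t, x)) {0..t} \<omega> = 0"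
  have "AE \<omega> in M. int_nu \<nu> (\<lambda>\<omega> t x. indicator (Gamma0 X b) (\<omega>, t, x)) {0..} \<omega> = 0"
    using H AE_space
  proof eventually_elim
    case (elim \<omega>)
    show ?case
    proof (rule int_nu_full[OF filt ad cad assms(4)])
      show "\<omega> \<in> space M" using elim by simp
      show "sets (\<nu> \<omega>) = sets borel" using assms(6) elim unfolding is_compensator_def by blast
      show "\<forall>t\<ge>0. int_nu \<nu> (\<lambda>\<omega> t x. indicator (Gamma0 X b) (\<omega>, t, x)) {0..t} \<omega> = 0" using elim by simp
    qed
  qed
  then show "J0 M X b \<in> null_sets M" by (rule part1[OF assms(2,3,4,5,6)])
next
  fix A K assume pd: "predictable_disintegration M F \<nu> A K"
  interpret P2ctx M F X b \<nu> A K
    by (rule P2ctx.intro[OF assms(2,3,4,6) pd assms(1)])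
  show "J0 M X b \<in> null_sets M" by (rule part1[OF assms(2,3,4,5,6) g_zero])
qed


end
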